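(* Assume the setting described in the context with $\alpha\le d$. Let $\Lambda$ be a fixed finite set of points of $\mathbb{Z}_{\ge1}^d$ (contained in $\Gamma$ for all large $L$), and define $$\mathcal{L}^{(\Lambda)}=\sum_{k\in\Lambda}\mathcal{L}^{(k)}_k+\frac{1}{2c_\alpha^N}\sum_{j,k\in\Lambda}\frac{\mathcal{L}^{(jk)}_{jk}}{\delta_{jk}+(1-\delta_{jk})\|\mathbf r_j-\mathbf r_k\|_\Gamma^\alpha},\qquad\hat{\mathcal{L}}^{(\Lambda)}=\sum_{k\in\Lambda}\mathcal{L}^{(k)}_k,$$ both acting on operators on $\bigotimes_{j\in\Lambda}\mathbb{C}^D$. Then for every trace-class operator $Q^{(\Lambda)}$ on $\bigotimes_{j\in\Lambda}\mathbb{C}^D$ and every $t\ge0$, $$\lim_{N\to\infty}\big\|e^{t\mathcal{L}^{(\Lambda)}}[Q^{(\Lambda)}]-e^{t\hat{\mathcal{L}}^{(\Lambda)}}[Q^{(\Lambda)}]\big\|_{\mathrm{tr}}=0.$$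
   Context: Fix integers $d\ge1$, $D\ge2$, exponent $\alpha\ge0$. For $L\in\mathbb{N}$ let $\Gamma=\{1,\dots,L\}^d$, $N=L^d$, site $j$ at $\mathbf r_j\in\Gamma$. With open boundary conditions $\mathrm{dist}(a,b)=|a-b|$, with periodic ones $\mathrm{dist}(a,b)=\min(|a-b|,L-|a-b|)$; $\|\mathbf r_j-\mathbf r_k\|_\Gamma=(\sum_\mu\mathrm{dist}(\mathbf r_j^\mu,\mathbf r_k^\mu)^2)^{1/2}$. The Kac factor is $c_\alpha^N=\sum_{j\in\Gamma}\|\mathbf r_j\|_\Gamma^{-\alpha}$. Each site carries $\mathbb{C}^D$; superscripts indicate the sites on which maps act. Data: Hermitian $h_k$ on $\mathbb{C}^D$, Hermitian $V_{jk}$ on $\mathbb{C}^D\otimes\mathbb{C}^D$, a finite family of operators $L_\mu$ on $\mathbb{C}^D$, rates $\kappa^\mu_k\ge0$, coefficients $w^\mu_{jk}\in\mathbb{C}$, such that the generators considered generate completely positive trace-preserving dynamics. $\mathcal{L}_k^{(k)}[X]=-i[h_k^{(k)},X]+\sum_\mu\kappa^\mu_k(L_\mu^{(k)}XL_\mu^{(k)\dagger}-\tfrac12\{L_\mu^{(k)\dagger}L_\mu^{(k)},X\})$; $\mathcal{L}_{jk}^{(jk)}[X]=-\tfrac{i(1-\delta_{jk})}{2}[V_{jk}^{(jk)}+V_{kj}^{(jk)},X]+\sum_\mu[\tfrac{w^\mu_{jk}}{2}(L_\mu^{(j)}XL_\mu^{(k)\dagger}-\tfrac12\{L_\mu^{(k)\dagger}L_\mu^{(j)},X\})+\tfrac{w^\mu_{kj}}{2}(L_\mu^{(k)}XL_\mu^{(j)\dagger}-\tfrac12\{L_\mu^{(j)\dagger}L_\mu^{(k)},X\})]$.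 The data are assumed uniformly bounded in $N$, in particular $C=\sup_N\sup_{j,k}\big(2\|V_{jk}\|+\sum_\mu(|w^\mu_{jk}|+|w^\mu_{kj}|)\|L_\mu\|\,\|L_\mu^\dagger\|\big)<\infty$. *)

theory Defs
  imports "HOL-Analysis.Analysis"
begin

definition mm :: "'i set \<Rightarrow> ('i \<Rightarrow> 'i \<Rightarrow> complex) \<Rightarrow> ('i \<Rightarrow> 'i \<Rightarrow> complex) \<Rightarrow> ('i \<Rightarrow> 'i \<Rightarrow> complex)" where
  "mm I X Y = (\<lambda>a b. \<Sum>c\<in>I. X a c * Y c b)"

definition adj :: "('i \<Rightarrow> 'i \<Rightarrow> complex) \<Rightarrow> ('i \<Rightarrow> 'i \<Rightarrow> complex)" where
  "adj X = (\<lambda>a b. cnj (X b a))"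

definition tr :: "'i set \<Rightarrow> ('i \<Rightarrow> 'i \<Rightarrow> complex) \<Rightarrow> complex" where
  "tr I X = (\<Sum>a\<in>I. X a a)"

definition psd :: "'i set \<Rightarrow> ('i \<Rightarrow> 'i \<Rightarrow> complex) \<Rightarrow> bool" where
  "psd I P = (\<forall>v :: 'i \<Rightarrow> complex.
      Im (\<Sum>a\<in>I. \<Sum>b\<in>I. cnj (v a) * P a b * v b) = 0 \<and>
      0 \<le> Re (\<Sum>a\<in>I. \<Sum>b\<in>I. cnj (v a) * P a b * v b))"

definition abs_op :: "'i set \<Rightarrow> ('i \<Rightarrow> 'i \<Rightarrow> complex) \<Rightarrow> ('i \<Rightarrow> 'i \<Rightarrow> complex)" where
  "abs_op I X = (THE P. (\<forall>a b. a \<notin> I \<or> b \<notin> I \<longrightarrow> P a b = 0) \<and> psd I P \<and>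
       (\<forall>a\<in>I. \<forall>b\<in>I. mm I P P a b = mm I (adj X) X a b))"

definition trace_norm :: "'i set \<Rightarrow> ('i \<Rightarrow> 'i \<Rightarrow> complex) \<Rightarrow> real" where
  "trace_norm I X = Re (tr I (abs_op I X))"

definition sexp :: "real \<Rightarrow> (('i \<Rightarrow> 'i \<Rightarrow> complex) \<Rightarrow> ('i \<Rightarrow> 'i \<Rightarrow> complex))
                    \<Rightarrow> ('i \<Rightarrow> 'i \<Rightarrow> complex) \<Rightarrow> ('i \<Rightarrow> 'i \<Rightarrow> complex)" where
  "sexp t \<Phi> X = (\<lambda>a b. \<Sum>n. complex_of_real (t ^ n / fact n) * (\<Phi> ^^ n) X a b)"

text \<open>Complete positivity: id_m \<otimes> Phi is positive for every ancilla dimension m.\<close>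
definition completely_positive :: "'i set \<Rightarrow> (('i \<Rightarrow> 'i \<Rightarrow> complex) \<Rightarrow> ('i \<Rightarrow> 'i \<Rightarrow> complex)) \<Rightarrow> bool" where
  "completely_positive I \<Phi> = (\<forall>(m::nat) (Y :: nat \<times> 'i \<Rightarrow> nat \<times> 'i \<Rightarrow> complex).
      psd ({..<m} \<times> I) Y \<longrightarrow>
      psd ({..<m} \<times> I) (\<lambda>(a,\<sigma>) (b,\<tau>). \<Phi> (\<lambda>\<sigma>' \<tau>'. Y (a,\<sigma>') (b,\<tau>')) \<sigma> \<tau>))"

definition trace_preserving :: "'i set \<Rightarrow> (('i \<Rightarrow> 'i \<Rightarrow> complex) \<Rightarrow> ('i \<Rightarrow> 'i \<Rightarrow> complex)) \<Rightarrow> bool" where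
  "trace_preserving I \<Phi> = (\<forall>X. tr I (\<Phi> X) = tr I X)"

definition cptp :: "'i set \<Rightarrow> (('i \<Rightarrow> 'i \<Rightarrow> complex) \<Rightarrow> ('i \<Rightarrow> 'i \<Rightarrow> complex)) \<Rightarrow> bool" where
  "cptp I \<Phi> = (completely_positive I \<Phi> \<and> trace_preserving I \<Phi>)"

text \<open>Sites are points of Z_{>=1}^d represented as lists of naturals of length d.\<close>
type_synonym site = "nat list"

definition Gamma :: "nat \<Rightarrow> nat \<Rightarrow> site set" where
  "Gamma d L = {r. length r = d \<and> (\<forall>i<d. 1 \<le> r ! i \<and> r ! i \<le> L)}"

text \<open>one-dimensional distance; per = True: periodic, per = False: open boundary conditions\<close>
definition cdist :: "bool \<Rightarrow> nat \<Rightarrow> nat \<Rightarrow> nat \<Rightarrow> real" where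
  "cdist per L a b = (if per then min \<bar>real a - real b\<bar> (real L - \<bar>real a - real b\<bar>)
                      else \<bar>real a - real b\<bar>)"

definition gnorm :: "bool \<Rightarrow> nat \<Rightarrow> nat \<Rightarrow> site \<Rightarrow> site \<Rightarrow> real" where
  "gnorm per L d r s = sqrt (\<Sum>i<d. (cdist per L (r ! i) (s ! i))\<^sup>2)"

text \<open>Kac factor c_alpha^N, N = L^d (with the Isabelle convention 0 powr x = 0).\<close>
definition kac :: "bool \<Rightarrow> nat \<Rightarrow> real \<Rightarrow> nat \<Rightarrow> real" where
  "kac per d \<alpha> L = (\<Sum>r\<in>Gamma d L. gnorm per L d r (replicate d 0) powr (- \<alpha>))"

text \<open>Basis of (C^D)^{\<otimes> Lambda}: configurations sigma : Lambda -> {0..<D}, extended by 0.\<close>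
type_synonym cfg = "site \<Rightarrow> nat"
type_synonym op = "cfg \<Rightarrow> cfg \<Rightarrow> complex"
type_synonym sop = "nat \<Rightarrow> nat \<Rightarrow> complex"
type_synonym top = "nat \<times> nat \<Rightarrow> nat \<times> nat \<Rightarrow> complex"

definition cfgs :: "nat \<Rightarrow> site set \<Rightarrow> cfg set" where
  "cfgs D \<Lambda> = {\<sigma>. (\<forall>j\<in>\<Lambda>. \<sigma> j < D) \<and> (\<forall>j. j \<notin> \<Lambda> \<longrightarrow> \<sigma> j = 0)}"

definition emb1 :: "site \<Rightarrow> sop \<Rightarrow> op" where
  "emb1 k A = (\<lambda>\<sigma> \<tau>. if (\<forall>i. i \<noteq> k \<longrightarrow> \<sigma> i = \<tau> i) then A (\<sigma> k) (\<tau> k) else 0)"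

text \<open>V^{(jk)}: two-site operator, first tensor factor on site j, second on site k (j \<noteq> k).\<close>
definition emb2 :: "site \<Rightarrow> site \<Rightarrow> top \<Rightarrow> op" where
  "emb2 j k V = (\<lambda>\<sigma> \<tau>. if (\<forall>i. i \<noteq> j \<and> i \<noteq> k \<longrightarrow> \<sigma> i = \<tau> i)
                        then V (\<sigma> j, \<sigma> k) (\<tau> j, \<tau> k) else 0)"

definition comm :: "cfg set \<Rightarrow> op \<Rightarrow> op \<Rightarrow> op" where
  "comm I A X = (\<lambda>\<sigma> \<tau>. mm I A X \<sigma> \<tau> - mm I X A \<sigma> \<tau>)"

definition dterm :: "cfg set \<Rightarrow> op \<Rightarrow> op \<Rightarrow> op \<Rightarrow> op" where
  "dterm I A B X = (\<lambda>\<sigma> \<tau>. mm I (mm I A X) (adj B) \<sigma> \<tau>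
       - (1/2) * (mm I (mm I (adj B) A) X \<sigma> \<tau> + mm I X (mm I (adj B) A) \<sigma> \<tau>))"

definition Lloc :: "cfg set \<Rightarrow> nat \<Rightarrow> (site \<Rightarrow> sop) \<Rightarrow> (nat \<Rightarrow> site \<Rightarrow> real) \<Rightarrow> (nat \<Rightarrow> sop)
                   \<Rightarrow> site \<Rightarrow> op \<Rightarrow> op" where
  "Lloc I m h \<kappa> Lop k X = (\<lambda>\<sigma> \<tau>.
      - \<i> * comm I (emb1 k (h k)) X \<sigma> \<tau>
      + (\<Sum>\<mu><m. complex_of_real (\<kappa> \<mu> k) * dterm I (emb1 k (Lop \<mu>)) (emb1 k (Lop \<mu>)) X \<sigma> \<tau>))"

definition Lpair :: "cfg set \<Rightarrow> nat \<Rightarrow> (site \<Rightarrow> site \<Rightarrow> top) \<Rightarrow> (nat \<Rightarrow> site \<Rightarrow> site \<Rightarrow> complex)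
                    \<Rightarrow> (nat \<Rightarrow> sop) \<Rightarrow> site \<Rightarrow> site \<Rightarrow> op \<Rightarrow> op" where
  "Lpair I m V w Lop j k X = (\<lambda>\<sigma> \<tau>.
      (if j = k then 0 else
         - (\<i> / 2) * comm I (\<lambda>\<sigma>' \<tau>'. emb2 j k (V j k) \<sigma>' \<tau>' + emb2 j k (V k j) \<sigma>' \<tau>') X \<sigma> \<tau>)
      + (\<Sum>\<mu><m. w \<mu> j k / 2 * dterm I (emb1 j (Lop \<mu>)) (emb1 k (Lop \<mu>)) X \<sigma> \<tau>
               + w \<mu> k j / 2 * dterm I (emb1 k (Lop \<mu>)) (emb1 j (Lop \<mu>)) X \<sigma> \<tau>))"

text \<open>Full generator L^{(Lambda)} for lattice side length L (N = L^d).\<close>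
definition Lfull :: "bool \<Rightarrow> nat \<Rightarrow> real \<Rightarrow> nat \<Rightarrow> site set \<Rightarrow> nat
     \<Rightarrow> (site \<Rightarrow> sop) \<Rightarrow> (site \<Rightarrow> site \<Rightarrow> top) \<Rightarrow> (nat \<Rightarrow> sop) \<Rightarrow> (nat \<Rightarrow> site \<Rightarrow> real)
     \<Rightarrow> (nat \<Rightarrow> site \<Rightarrow> site \<Rightarrow> complex) \<Rightarrow> nat \<Rightarrow> op \<Rightarrow> op" where
  "Lfull per d \<alpha> D \<Lambda> m h V Lop \<kappa> w L X = (\<lambda>\<sigma> \<tau>.
      (\<Sum>k\<in>\<Lambda>. Lloc (cfgs D \<Lambda>) m h \<kappa> Lop k X \<sigma> \<tau>)
      + complex_of_real (1 / (2 * kac per d \<alpha> L)) *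
        (\<Sum>j\<in>\<Lambda>. \<Sum>k\<in>\<Lambda>. Lpair (cfgs D \<Lambda>) m V w Lop j k X \<sigma> \<tau> /
            complex_of_real (if j = k then 1 else gnorm per L d j k powr \<alpha>)))"

definition Lhat :: "nat \<Rightarrow> site set \<Rightarrow> nat \<Rightarrow> (site \<Rightarrow> sop) \<Rightarrow> (nat \<Rightarrow> sop)
     \<Rightarrow> (nat \<Rightarrow> site \<Rightarrow> real) \<Rightarrow> op \<Rightarrow> op" where
  "Lhat D \<Lambda> m h Lop \<kappa> X = (\<lambda>\<sigma> \<tau>. \<Sum>k\<in>\<Lambda>. Lloc (cfgs D \<Lambda>) m h \<kappa> Lop k X \<sigma> \<tau>)"

end

theory Submission
  imports Defs
begin

definition mv :: "'i set \<Rightarrow> ('i \<Rightarrow> 'i \<Rightarrow> complex) \<Rightarrow> ('i \<Rightarrow> complex) \<Rightarrow> ('i \<Rightarrow> complex)" where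
  "mv I A v = (\<lambda>a. \<Sum>b\<in>I. A a b * v b)"
definition ip :: "'i set \<Rightarrow> ('i \<Rightarrow> complex) \<Rightarrow> ('i \<Rightarrow> complex) \<Rightarrow> complex" where
  "ip I u v = (\<Sum>a\<in>I. cnj (u a) * v a)"
definition qf :: "'i set \<Rightarrow> ('i \<Rightarrow> 'i \<Rightarrow> complex) \<Rightarrow> ('i \<Rightarrow> complex) \<Rightarrow> complex" where
  "qf I A v = (\<Sum>a\<in>I. \<Sum>b\<in>I. cnj (v a) * A a b * v b)"
definition nrm2 :: "'i set \<Rightarrow> ('i \<Rightarrow> complex) \<Rightarrow> real" where
  "nrm2 I v = (\<Sum>a\<in>I. (cmod (v a))\<^sup>2)"
definition Idm :: "'i \<Rightarrow> 'i \<Rightarrow> complex" where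
  "Idm = (\<lambda>a b. if a = b then 1 else 0)"
definition fro :: "'i set \<Rightarrow> ('i \<Rightarrow> 'i \<Rightarrow> complex) \<Rightarrow> real" where
  "fro I A = (\<Sum>a\<in>I. \<Sum>b\<in>I. (cmod (A a b))\<^sup>2)"

lemma qf_ip: "qf I A v = ip I v (mv I A v)"
  unfolding qf_def ip_def mv_def by (simp add: sum_distrib_left mult.assoc)

lemma psd_qf: "psd I P \<longleftrightarrow> (\<forall>v. Im (qf I P v) = 0 \<and> 0 \<le> Re (qf I P v))"
  unfolding psd_def qf_def by simp

lemma ip_self: "ip I v v = complex_of_real (nrm2 I v)"
  unfolding ip_def nrm2_def of_real_sum
  by (rule sum.cong) (auto simp: mult.commute intro: complex_norm_square[unfolded of_real_power, symmetric])

lemma nrm2_nonneg: "0 \<le> nrm2 I v"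
  unfolding nrm2_def by (simp add: sum_nonneg)

lemma mm_assoc: "finite I \<Longrightarrow> mm I (mm I A B) C = mm I A (mm I B C)"
  unfolding mm_def by (auto simp: sum_distrib_left sum_distrib_right mult.assoc intro!: ext sum.swap)

lemma mv_mm: "mv I (mm I A B) v = mv I A (mv I B v)"
  unfolding mm_def mv_def by (auto simp: sum_distrib_left sum_distrib_right mult.assoc intro!: ext sum.swap)

lemma ip_adj: "ip I u (mv I A v) = ip I (mv I (adj A) u) v"
  unfolding ip_def mv_def adj_def
  by (auto simp: sum_distrib_left sum_distrib_right mult_ac intro!: sum.swap)

lemma cs_sum: "(cmod (\<Sum>i\<in>I. f i * g i))\<^sup>2 \<le> (\<Sum>i\<in>I. (cmod (f i))\<^sup>2) * (\<Sum>i\<in>I. (cmod (g i))\<^sup>2)"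
proof -
  have "cmod (\<Sum>i\<in>I. f i * g i) \<le> (\<Sum>i\<in>I. cmod (f i) * cmod (g i))"
    by (metis (no_types, lifting) norm_mult norm_sum sum.cong)
  hence "(cmod (\<Sum>i\<in>I. f i * g i))\<^sup>2 \<le> (\<Sum>i\<in>I. cmod (f i) * cmod (g i))\<^sup>2"
    by (simp add: power_mono)
  also have "\<dots> \<le> (\<Sum>i\<in>I. (cmod (f i))\<^sup>2) * (\<Sum>i\<in>I. (cmod (g i))\<^sup>2)"
    by (rule Cauchy_Schwarz_ineq_sum)
  finally show ?thesis .
qed

lemma ip_cs: "(cmod (ip I u v))\<^sup>2 \<le> nrm2 I u * nrm2 I v"
  unfolding ip_def nrm2_def using cs_sum[of "\<lambda>a. cnj (u a)" v I] by simp

lemma mv_fro: "nrm2 I (mv I A v) \<le> fro I A * nrm2 I v"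
proof -
  have "nrm2 I (mv I A v) = (\<Sum>a\<in>I. (cmod (\<Sum>b\<in>I. A a b * v b))\<^sup>2)"
    unfolding nrm2_def mv_def by simp
  also have "\<dots> \<le> (\<Sum>a\<in>I. (\<Sum>b\<in>I. (cmod (A a b))\<^sup>2) * nrm2 I v)"
    unfolding nrm2_def by (rule sum_mono) (rule cs_sum)
  also have "\<dots> = fro I A * nrm2 I v"
    unfolding fro_def by (simp add: sum_distrib_right)
  finally show ?thesis .
qed

definition herm :: "'i set \<Rightarrow> ('i \<Rightarrow> 'i \<Rightarrow> complex) \<Rightarrow> bool" where
  "herm I A = (\<forall>a\<in>I. \<forall>b\<in>I. A a b = cnj (A b a))"

lemma sum_two_pt:
  assumes "finite I" "a \<in> I" "b \<in> I" "a \<noteq> b" "\<And>y. y \<noteq> a \<Longrightarrow> y \<noteq> b \<Longrightarrow> g y = 0"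
  shows "sum g I = g a + g b"
proof -
  have "sum g I = sum g {a,b}"
    by (rule sum.mono_neutral_right) (use assms in auto)
  thus ?thesis using assms by simp
qed

lemma sum_one_pt:
  assumes "finite I" "a \<in> I" "\<And>y. y \<noteq> a \<Longrightarrow> g y = 0"
  shows "sum g I = g a"
proof -
  have "sum g I = sum g {a}"
    by (rule sum.mono_neutral_right) (use assms in auto)
  thus ?thesis using assms by simp
qed

lemma qf_one:
  assumes "finite I" "a \<in> I"
  shows "qf I P (\<lambda>x. if x = a then 1 else 0) = P a a"
  unfolding qf_def
  apply (subst sum_one_pt[OF assms]) apply (simp add: sum.neutral)
  apply (subst sum_one_pt[OF assms]) apply simp
  by simp

lemma qf_two:
  assumes "finite I" "a \<in> I" "b \<in> I" "a \<noteq> b"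
  shows "qf I P (\<lambda>x. if x = a then \<alpha> else if x = b then \<beta> else 0) =
     cnj \<alpha> * P a a * \<alpha> + cnj \<alpha> * P a b * \<beta> + cnj \<beta> * P b a * \<alpha> + cnj \<beta> * P b b * \<beta>"
proof -
  let ?v = "\<lambda>x. if x = a then \<alpha> else if x = b then \<beta> else 0"
  have inner: "(\<Sum>y\<in>I. cnj (?v x) * P x y * ?v y) = cnj (?v x) * P x a * \<alpha> + cnj (?v x) * P x b * \<beta>" for x
    by (subst sum_two_pt[OF assms]) (use assms in auto)
  have "qf I P ?v = (\<Sum>x\<in>I. cnj (?v x) * P x a * \<alpha> + cnj (?v x) * P x b * \<beta>)"
    unfolding qf_def inner ..
  also have "\<dots> = (cnj \<alpha> * P a a * \<alpha> + cnj \<alpha> * P a b * \<beta>) + (cnj \<beta> * P b a * \<alpha> + cnj \<beta> * P b b * \<beta>)"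
    by (subst sum_two_pt[OF assms]) (use assms in auto)
  finally show ?thesis by (simp add: add.assoc)
qed

lemma psd_herm: assumes "psd I P" "finite I" shows "herm I P"
  unfolding herm_def
proof (intro ballI)
  fix a b assume a: "a \<in> I" and b: "b \<in> I"
  have ps: "\<And>v. Im (qf I P v) = 0" using assms(1) by (simp add: psd_qf)
  show "P a b = cnj (P b a)"
  proof (cases "a = b")
    case True
    have "Im (P a a) = 0" using ps[of "\<lambda>x. if x = a then 1 else 0"] qf_one[OF assms(2) a] by simp
    thus ?thesis using True by (simp add: complex_eq_iff)
  next
    case False
    have ia: "Im (P a a) = 0" using ps[of "\<lambda>x. if x = a then 1 else 0"] qf_one[OF assms(2) a] by simp
    have ib: "Im (P b b) = 0" using ps[of "\<lambda>x. if x = b then 1 else 0"] qf_one[OF assms(2) b] by simp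
    have 1: "Im (P a b) + Im (P b a) = 0"
      using ps[of "\<lambda>x. if x = a then 1 else if x = b then 1 else 0"] qf_two[OF assms(2) a b False, of P 1 1] ia ib
      by simp
    have 2: "Re (P a b) - Re (P b a) = 0"
      using ps[of "\<lambda>x. if x = a then 1 else if x = b then \<i> else 0"] qf_two[OF assms(2) a b False, of P 1 \<i>] ia ib
      by simp
    show ?thesis using 1 2 by (simp add: complex_eq_iff)
  qed
qed

lemma mv_cong: "(\<And>b. b \<in> I \<Longrightarrow> A a b = A' a b) \<Longrightarrow> (\<And>b. b \<in> I \<Longrightarrow> v b = v' b) \<Longrightarrow> mv I A v a = mv I A' v' a"
  unfolding mv_def by (rule sum.cong) auto

lemma ip_cong: "(\<And>b. b \<in> I \<Longrightarrow> u b = u' b) \<Longrightarrow> (\<And>b. b \<in> I \<Longrightarrow> v b = v' b) \<Longrightarrow> ip I u v = ip I u' v'"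
  unfolding ip_def by (rule sum.cong) auto

lemma ip_herm: assumes "herm I A" shows "ip I u (mv I A v) = ip I (mv I A u) v"
proof -
  have "ip I u (mv I A v) = ip I (mv I (adj A) u) v" by (rule ip_adj)
  also have "\<dots> = ip I (mv I A u) v"
  proof (rule ip_cong)
    fix a assume a: "a \<in> I"
    show "mv I (adj A) u a = mv I A u a"
    proof (rule mv_cong)
      fix b assume b: "b \<in> I"
      show "adj A a b = A a b" using assms a b unfolding herm_def adj_def
        by (metis complex_cnj_cnj)
    qed simp
  qed simp
  finally show ?thesis .
qed

lemma ip_cnj: "ip I u v = cnj (ip I v u)"
  unfolding ip_def by (simp add: mult.commute)

lemma mv_lin: "mv I A (\<lambda>x. v x + c * u x) = (\<lambda>a. mv I A v a + c * mv I A u a)"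
  unfolding mv_def by (auto simp: algebra_simps sum.distrib sum_distrib_left)

lemma ip_lin_left: "ip I (\<lambda>x. v x + c * u x) w = ip I v w + cnj c * ip I u w"
  unfolding ip_def by (auto simp: algebra_simps sum.distrib sum_distrib_left)

lemma ip_lin_right: "ip I w (\<lambda>x. v x + c * u x) = ip I w v + c * ip I w u"
  unfolding ip_def by (auto simp: algebra_simps sum.distrib sum_distrib_left)

lemma qf_expand: "qf I A (\<lambda>x. v x + c * u x) =
    qf I A v + c * ip I v (mv I A u) + cnj c * ip I u (mv I A v) + cnj c * c * qf I A u"
  unfolding qf_ip mv_lin ip_lin_left ip_lin_right by (simp add: algebra_simps)

lemma psd_kernel:
  assumes "psd I P" "finite I" "Re (qf I P v) = 0"
  shows "nrm2 I (mv I P v) = 0"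
proof (rule ccontr)
  let ?u = "mv I P v"
  define n where "n = nrm2 I ?u"
  assume "nrm2 I ?u \<noteq> 0"
  hence npos: "n > 0" using nrm2_nonneg[of I ?u] unfolding n_def by linarith
  have h: "herm I P" by (rule psd_herm[OF assms(1,2)])
  define R where "R = Re (qf I P ?u)"
  have R0: "R \<ge> 0" using assms(1) unfolding R_def psd_qf by auto
  define s where "s = n / (R + 1)"
  have spos: "s > 0" unfolding s_def using npos R0 by simp
  have e1: "ip I v (mv I P ?u) = of_real n"
    unfolding ip_herm[OF h] n_def ip_self[symmetric] by simp
  have e2: "ip I ?u (mv I P v) = of_real n"
    unfolding n_def ip_self[symmetric] by simp
  have "0 \<le> Re (qf I P (\<lambda>x. v x + complex_of_real (- s) * ?u x))"
    using assms(1) unfolding psd_qf by blast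
  also have "\<dots> = Re (qf I P v) - 2 * s * n + s * s * R"
    unfolding qf_expand e1 e2 R_def by (simp add: algebra_simps)
  finally have "2 * s * n \<le> s * s * R" using assms(3) by simp
  hence "2 * n \<le> s * R" using spos by (simp add: mult.assoc)
  also have "s * R < n" unfolding s_def using npos R0
    by (simp add: field_simps)
  finally show False using npos by simp
qed

lemma nrm2_zero: "finite I \<Longrightarrow> nrm2 I v = 0 \<Longrightarrow> a \<in> I \<Longrightarrow> v a = 0"
  unfolding nrm2_def by (simp add: sum_nonneg_eq_0_iff)

lemma tr_mm_comm: "finite I \<Longrightarrow> tr I (mm I X Y) = tr I (mm I Y X)"
  unfolding tr_def mm_def by (subst sum.swap) (simp add: mult.commute)

lemma sqrt_unique:
  assumes fin: "finite I" and pP: "psd I P" and pQ: "psd I Q"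
    and sq: "\<forall>a\<in>I. \<forall>b\<in>I. mm I P P a b = mm I Q Q a b"
  shows "\<forall>a\<in>I. \<forall>b\<in>I. P a b = Q a b"
proof -
  define D where "D = (\<lambda>a b. P a b - Q a b)"
  have hP: "herm I P" by (rule psd_herm[OF pP fin])
  have hQ: "herm I Q" by (rule psd_herm[OF pQ fin])
  have hD: "D a b = cnj (D b a)" if a: "a \<in> I" and b: "b \<in> I" for a b
  proof -
    have "P a b = cnj (P b a)" "Q a b = cnj (Q b a)" using hP hQ a b unfolding herm_def by blast+
    thus ?thesis unfolding D_def by simp
  qed
  have hD': "cnj (D b a) = D a b" if a: "a \<in> I" and b: "b \<in> I" for a b
    using hD[OF a b] by simp
  have mmD1: "mm I P D a b = mm I P P a b - mm I P Q a b" for a b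
    unfolding mm_def D_def by (simp add: algebra_simps sum_subtractf)
  have mmD2: "mm I D Q a b = mm I P Q a b - mm I Q Q a b" for a b
    unfolding mm_def D_def by (simp add: algebra_simps sum_subtractf)
  have C1: "\<And>a b. a \<in> I \<Longrightarrow> b \<in> I \<Longrightarrow> mm I P D a b = - mm I D Q a b"
    using sq mmD1 mmD2 by simp
  define va where "va = (\<lambda>a b. D b a)"
  have qfP: "qf I P (va a) = mm I D (mm I P D) a a" if a: "a \<in> I" for a
    unfolding qf_def mm_def va_def
    by (auto simp: sum_distrib_left mult.assoc hD'[OF a] intro!: sum.cong)
  have qfQ: "qf I Q (va a) = mm I D (mm I Q D) a a" if a: "a \<in> I" for a
    unfolding qf_def mm_def va_def
    by (auto simp: sum_distrib_left mult.assoc hD'[OF a] intro!: sum.cong)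
  have t1: "tr I (mm I D (mm I P D)) = - tr I (mm I D (mm I D Q))"
    unfolding tr_def mm_def[of I D "mm I P D"] mm_def[of I D "mm I D Q"]
    by (simp add: C1 sum_negf[symmetric])
  have t2: "tr I (mm I D (mm I Q D)) = tr I (mm I D (mm I D Q))"
  proof -
    have "tr I (mm I D (mm I Q D)) = tr I (mm I (mm I D Q) D)" by (simp add: mm_assoc fin)
    also have "\<dots> = tr I (mm I D (mm I D Q))" by (rule tr_mm_comm[OF fin])
    finally show ?thesis .
  qed
  have sum0: "(\<Sum>a\<in>I. Re (qf I P (va a)) + Re (qf I Q (va a))) = 0"
  proof -
    have "(\<Sum>a\<in>I. Re (qf I P (va a)) + Re (qf I Q (va a))) =
        Re (tr I (mm I D (mm I P D)) + tr I (mm I D (mm I Q D)))"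
      unfolding tr_def by (simp add: qfP qfQ sum.distrib)
    thus ?thesis using t1 t2 by simp
  qed
  have nnP: "\<And>a. 0 \<le> Re (qf I P (va a))" using pP unfolding psd_qf by blast
  have nnQ: "\<And>a. 0 \<le> Re (qf I Q (va a))" using pQ unfolding psd_qf by blast
  have z: "\<And>a. a \<in> I \<Longrightarrow> Re (qf I P (va a)) + Re (qf I Q (va a)) = 0"
    using sum0 fin nnP nnQ by (simp add: sum_nonneg_eq_0_iff add_nonneg_nonneg)
  have zP: "\<And>a. a \<in> I \<Longrightarrow> Re (qf I P (va a)) = 0" using z nnP nnQ by (smt (verit))
  have zQ: "\<And>a. a \<in> I \<Longrightarrow> Re (qf I Q (va a)) = 0" using z nnP nnQ by (smt (verit))
  have PD0: "mm I P D x a = 0" if "x \<in> I" "a \<in> I" for x a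
  proof -
    have "mv I P (va a) x = 0" using nrm2_zero[OF fin psd_kernel[OF pP fin zP[OF that(2)]] that(1)] .
    thus ?thesis unfolding mv_def mm_def va_def .
  qed
  have QD0: "mm I Q D x a = 0" if "x \<in> I" "a \<in> I" for x a
  proof -
    have "mv I Q (va a) x = 0" using nrm2_zero[OF fin psd_kernel[OF pQ fin zQ[OF that(2)]] that(1)] .
    thus ?thesis unfolding mv_def mm_def va_def .
  qed
  have DD0: "mm I D D a a = 0" if "a \<in> I" for a
  proof -
    have "mm I D D a a = mm I P D a a - mm I Q D a a"
      unfolding mm_def sum_subtractf[symmetric] by (rule sum.cong) (simp_all add: D_def algebra_simps)
    thus ?thesis using PD0 QD0 that by simp
  qed
  show ?thesis
  proof (intro ballI)
    fix a b assume a: "a \<in> I" and b: "b \<in> I"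
    have "mm I D D a a = complex_of_real (\<Sum>x\<in>I. (cmod (D a x))\<^sup>2)"
      unfolding mm_def of_real_sum
    proof (rule sum.cong)
      fix x assume x: "x \<in> I"
      have "D a x * D x a = D a x * cnj (D a x)" using hD[OF x a] by simp
      also have "\<dots> = complex_of_real ((cmod (D a x))\<^sup>2)" by (rule complex_norm_square[symmetric])
      finally show "D a x * D x a = complex_of_real ((cmod (D a x))\<^sup>2)" .
    qed simp
    hence "(\<Sum>x\<in>I. (cmod (D a x))\<^sup>2) = 0" using DD0[OF a] by (metis of_real_eq_0_iff)
    hence "(cmod (D a b))\<^sup>2 = 0" using fin b by (simp add: sum_nonneg_eq_0_iff)
    thus "P a b = Q a b" unfolding D_def by simp
  qed
qed

definition eqm :: "'i set \<Rightarrow> ('i \<Rightarrow> 'i \<Rightarrow> complex) \<Rightarrow> ('i \<Rightarrow> 'i \<Rightarrow> complex) \<Rightarrow> bool" where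
  "eqm I X Y = (\<forall>a\<in>I. \<forall>b\<in>I. X a b = Y a b)"

lemma eqm_refl[simp]: "eqm I X X" unfolding eqm_def by simp
lemma eqm_sym: "eqm I X Y \<Longrightarrow> eqm I Y X" unfolding eqm_def by simp
lemma eqm_trans: "eqm I X Y \<Longrightarrow> eqm I Y Z \<Longrightarrow> eqm I X Z" unfolding eqm_def by simp

lemma eqm_trans_calc[trans]: "eqm I X Y \<Longrightarrow> eqm I Y Z \<Longrightarrow> eqm I X Z" by (rule eqm_trans)

lemma mm_cong: "eqm I X X' \<Longrightarrow> eqm I Y Y' \<Longrightarrow> eqm I (mm I X Y) (mm I X' Y')"
  unfolding eqm_def mm_def by auto

lemma mm_add_left: "mm I (\<lambda>a b. X a b + Y a b) Z = (\<lambda>a b. mm I X Z a b + mm I Y Z a b)"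
  unfolding mm_def by (auto simp: algebra_simps sum.distrib)
lemma mm_add_right: "mm I Z (\<lambda>a b. X a b + Y a b) = (\<lambda>a b. mm I Z X a b + mm I Z Y a b)"
  unfolding mm_def by (auto simp: algebra_simps sum.distrib)
lemma mm_diff_right: "mm I Z (\<lambda>a b. X a b - Y a b) = (\<lambda>a b. mm I Z X a b - mm I Z Y a b)"
  unfolding mm_def by (auto simp: algebra_simps sum_subtractf)
lemma mm_diff_left: "mm I (\<lambda>a b. X a b - Y a b) Z = (\<lambda>a b. mm I X Z a b - mm I Y Z a b)"
  unfolding mm_def by (auto simp: algebra_simps sum_subtractf)
lemma mm_scale_left: "mm I (\<lambda>a b. r * X a b) Z = (\<lambda>a b. r * mm I X Z a b)"
  unfolding mm_def by (auto simp: algebra_simps sum_distrib_left)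
lemma mm_scale_right: "mm I Z (\<lambda>a b. r * X a b) = (\<lambda>a b. r * mm I Z X a b)"
  unfolding mm_def by (auto simp: algebra_simps sum_distrib_left)
lemma mm_zero_left: "mm I (\<lambda>a b. 0) Z = (\<lambda>a b. 0)"
  unfolding mm_def by auto
lemma mm_zero_right: "mm I Z (\<lambda>a b. 0) = (\<lambda>a b. 0)"
  unfolding mm_def by auto

lemma mm_Idm_left: "finite I \<Longrightarrow> a \<in> I \<Longrightarrow> mm I Idm Y a b = Y a b"
  unfolding mm_def Idm_def by (subst sum_one_pt[of I a]) auto
lemma mm_Idm_right: "finite I \<Longrightarrow> b \<in> I \<Longrightarrow> mm I Y Idm a b = Y a b"
  unfolding mm_def Idm_def by (subst sum_one_pt[of I b]) auto

lemma qf_cong: "eqm I X Y \<Longrightarrow> qf I X v = qf I Y v"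
  unfolding eqm_def qf_def by (auto intro!: sum.cong)
lemma psd_cong: "eqm I X Y \<Longrightarrow> psd I X \<Longrightarrow> psd I Y"
  unfolding psd_qf using qf_cong by metis
lemma qf_add: "qf I (\<lambda>a b. X a b + Y a b) v = qf I X v + qf I Y v"
  unfolding qf_def by (simp add: algebra_simps sum.distrib)
lemma qf_diff: "qf I (\<lambda>a b. X a b - Y a b) v = qf I X v - qf I Y v"
  unfolding qf_def by (simp add: algebra_simps sum_subtractf)
lemma qf_scale: "qf I (\<lambda>a b. r * X a b) v = r * qf I X v"
  unfolding qf_def by (simp add: algebra_simps sum_distrib_left)
lemma qf_zero: "qf I (\<lambda>a b. 0) v = 0"
  unfolding qf_def by simp
lemma qf_Idm: "finite I \<Longrightarrow> qf I Idm v = complex_of_real (nrm2 I v)"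
proof -
  assume fin: "finite I"
  have "qf I Idm v = (\<Sum>a\<in>I. cnj (v a) * v a)"
    unfolding qf_def Idm_def
    by (rule sum.cong) (auto simp: fin sum_one_pt[of I])
  also have "\<dots> = ip I v v" unfolding ip_def ..
  finally show ?thesis by (simp add: ip_self)
qed
lemma nrm2_cong: "(\<And>a. a \<in> I \<Longrightarrow> v a = w a) \<Longrightarrow> nrm2 I v = nrm2 I w"
  unfolding nrm2_def by (auto intro!: sum.cong)
lemma mv_Idm: "finite I \<Longrightarrow> a \<in> I \<Longrightarrow> mv I Idm v a = v a"
  unfolding mv_def Idm_def by (subst sum_one_pt[of I a]) auto

primrec mpow :: "'i set \<Rightarrow> ('i \<Rightarrow> 'i \<Rightarrow> complex) \<Rightarrow> nat \<Rightarrow> ('i \<Rightarrow> 'i \<Rightarrow> complex)" where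
  "mpow I B 0 = Idm"
| "mpow I B (Suc n) = mm I B (mpow I B n)"

definition contr :: "'i set \<Rightarrow> ('i \<Rightarrow> 'i \<Rightarrow> complex) \<Rightarrow> bool" where
  "contr I B = (finite I \<and> psd I B \<and> (\<forall>v. nrm2 I (mv I B v) \<le> nrm2 I v))"

lemma mpow_add: "finite I \<Longrightarrow> eqm I (mpow I B (i + j)) (mm I (mpow I B i) (mpow I B j))"
proof (induction i)
  case 0 thus ?case unfolding eqm_def by (simp add: mm_Idm_left)
next
  case (Suc i)
  have "eqm I (mm I B (mpow I B (i + j))) (mm I B (mm I (mpow I B i) (mpow I B j)))"
    by (rule mm_cong[OF eqm_refl Suc.IH[OF Suc.prems]])
  thus ?case by (simp add: mm_assoc Suc.prems)
qed

lemma mpow_comm: "finite I \<Longrightarrow> eqm I (mm I (mpow I B i) (mpow I B j)) (mm I (mpow I B j) (mpow I B i))"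
  by (metis add.commute eqm_sym eqm_trans mpow_add)

lemma mpow_one: "finite I \<Longrightarrow> eqm I (mpow I B 1) B"
  unfolding eqm_def by (simp add: mm_Idm_right)

lemma mv_mpow_nrm: assumes "contr I B" shows "nrm2 I (mv I (mpow I B n) v) \<le> nrm2 I v"
proof (induction n)
  case 0
  have "nrm2 I (mv I Idm v) = nrm2 I v"
    by (rule nrm2_cong) (use assms in \<open>simp add: contr_def mv_Idm\<close>)
  thus ?case by simp
next
  case (Suc n)
  have "nrm2 I (mv I (mpow I B (Suc n)) v) = nrm2 I (mv I B (mv I (mpow I B n) v))"
    by (simp add: mv_mm)
  also have "\<dots> \<le> nrm2 I (mv I (mpow I B n) v)" using assms unfolding contr_def by blast
  finally show ?case using Suc.IH by linarith
qed

lemma ip_bound: assumes "nrm2 I w \<le> nrm2 I v" shows "cmod (ip I v w) \<le> nrm2 I v"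
proof -
  have "(cmod (ip I v w))\<^sup>2 \<le> nrm2 I v * nrm2 I w" by (rule ip_cs)
  also have "\<dots> \<le> (nrm2 I v)\<^sup>2" using assms nrm2_nonneg[of I v]
    by (simp add: power2_eq_square mult_left_mono)
  finally show ?thesis by (rule power2_le_imp_le) (rule nrm2_nonneg)
qed

lemma mpow_bound: assumes "contr I B" shows "Re (qf I (mpow I B n) v) \<le> nrm2 I v"
proof -
  have "Re (qf I (mpow I B n) v) \<le> cmod (qf I (mpow I B n) v)" by (rule complex_Re_le_cmod)
  also have "\<dots> \<le> nrm2 I v" unfolding qf_ip by (rule ip_bound[OF mv_mpow_nrm[OF assms]])
  finally show ?thesis .
qed

lemma mpow_herm: assumes "contr I B" shows "herm I (mpow I B n)"
proof -
  have fin: "finite I" using assms by (simp add: contr_def)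
  have hB: "herm I B" using assms psd_herm by (auto simp: contr_def)
  show ?thesis
  proof (induction n)
    case 0 thus ?case by (auto simp: herm_def Idm_def)
  next
    case (Suc n)
    let ?P = "mpow I B n"
    have c: "eqm I (mm I B ?P) (mm I ?P B)"
    proof -
      have "eqm I (mm I B ?P) (mm I (mpow I B 1) ?P)" by (rule mm_cong[OF eqm_sym[OF mpow_one[OF fin]] eqm_refl])
      also have "eqm I \<dots> (mm I ?P (mpow I B 1))" by (rule mpow_comm[OF fin])
      also have "eqm I \<dots> (mm I ?P B)" by (rule mm_cong[OF eqm_refl mpow_one[OF fin]])
      finally show ?thesis .
    qed
    show ?case unfolding herm_def
    proof (intro ballI)
      fix a b assume a: "a \<in> I" and b: "b \<in> I"
      have "cnj (mm I B ?P b a) = (\<Sum>x\<in>I. cnj (B b x) * cnj (?P x a))"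
        unfolding mm_def by simp
      also have "\<dots> = (\<Sum>x\<in>I. ?P a x * B x b)"
      proof (rule sum.cong)
        fix x assume x: "x \<in> I"
        have "B x b = cnj (B b x)" using hB x b unfolding herm_def by blast
        moreover have "?P a x = cnj (?P x a)" using Suc.IH x a unfolding herm_def by blast
        ultimately show "cnj (B b x) * cnj (?P x a) = ?P a x * B x b" by (simp add: mult.commute)
      qed simp
      also have "\<dots> = mm I ?P B a b" unfolding mm_def ..
      also have "\<dots> = mm I B ?P a b" using c a b unfolding eqm_def by simp
      finally show "mpow I B (Suc n) a b = cnj (mpow I B (Suc n) b a)" by simp
    qed
  qed
qed


lemma mpow_psd: assumes "contr I B" shows "psd I (mpow I B n)"
proof -
  have fin: "finite I" using assms by (simp add: contr_def)
  have pB: "psd I B" using assms by (simp add: contr_def)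
  define k where "k = n div 2"
  have k: "n = k + k \<or> n = k + Suc k" unfolding k_def by presburger
  let ?P = "mpow I B k"
  have hP: "herm I ?P" by (rule mpow_herm[OF assms])
  show ?thesis
  proof (cases "n = k + k")
    case True
    have e: "eqm I (mm I ?P ?P) (mpow I B n)" unfolding True by (rule eqm_sym[OF mpow_add[OF fin]])
    have "psd I (mm I ?P ?P)" unfolding psd_qf
    proof
      fix v
      have "qf I (mm I ?P ?P) v = complex_of_real (nrm2 I (mv I ?P v))"
        unfolding qf_ip mv_mm ip_herm[OF hP] ip_self ..
      thus "Im (qf I (mm I ?P ?P) v) = 0 \<and> 0 \<le> Re (qf I (mm I ?P ?P) v)" by (simp add: nrm2_nonneg)
    qed
    thus ?thesis by (rule psd_cong[OF e])
  next
    case False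
    hence n: "n = k + Suc k" using k by simp
    have e: "eqm I (mm I ?P (mm I B ?P)) (mpow I B n)" unfolding n
      using eqm_sym[OF mpow_add[OF fin, of B k "Suc k"]] by simp
    have "psd I (mm I ?P (mm I B ?P))" unfolding psd_qf
    proof
      fix v
      have "qf I (mm I ?P (mm I B ?P)) v = qf I B (mv I ?P v)"
        unfolding qf_ip mv_mm ip_herm[OF hP] ..
      thus "Im (qf I (mm I ?P (mm I B ?P)) v) = 0 \<and> 0 \<le> Re (qf I (mm I ?P (mm I B ?P)) v)"
        using pB unfolding psd_qf by simp
    qed
    thus ?thesis by (rule psd_cong[OF e])
  qed
qed

inductive cone :: "'i set \<Rightarrow> ('i \<Rightarrow> 'i \<Rightarrow> complex) \<Rightarrow> ('i \<Rightarrow> 'i \<Rightarrow> complex) \<Rightarrow> real \<Rightarrow> bool"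
  for I B where
  cpow: "cone I B (mpow I B n) 1"
| czero: "cone I B (\<lambda>a b. 0) 0"
| cadd: "cone I B X s \<Longrightarrow> cone I B Y t \<Longrightarrow> cone I B (\<lambda>a b. X a b + Y a b) (s + t)"
| cscale: "cone I B X s \<Longrightarrow> 0 \<le> r \<Longrightarrow> cone I B (\<lambda>a b. complex_of_real r * X a b) (r * s)"
| ceq: "cone I B X s \<Longrightarrow> eqm I X Y \<Longrightarrow> cone I B Y s"

lemma cone_val: "cone I B X s \<Longrightarrow> s = s' \<Longrightarrow> cone I B X s'" by simp

lemma cone_psd: assumes "contr I B" and "cone I B X s"
  shows "psd I X \<and> (\<forall>v. Re (qf I X v) \<le> s * nrm2 I v)"
  using assms(2)
proof (induction rule: cone.induct)
  case (cpow n) thus ?case using mpow_psd[OF assms(1)] mpow_bound[OF assms(1)] by simp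
next
  case czero thus ?case by (simp add: psd_qf qf_zero)
next
  case (cadd X s Y t)
  thus ?case by (auto simp: psd_qf qf_add algebra_simps add_mono)
next
  case (cscale X s r)
  have p: "psd I (\<lambda>a b. complex_of_real r * X a b)"
    using cscale unfolding psd_qf by (simp add: qf_scale)
  have "Re (qf I (\<lambda>a b. complex_of_real r * X a b) v) \<le> r * s * nrm2 I v" for v
  proof -
    have "Re (qf I (\<lambda>a b. complex_of_real r * X a b) v) = r * Re (qf I X v)" by (simp add: qf_scale)
    also have "\<dots> \<le> r * (s * nrm2 I v)" using cscale by (simp add: mult_left_mono)
    finally show ?thesis by simp
  qed
  thus ?case using p by simp
next
  case (ceq X s Y)
  thus ?case using psd_cong qf_cong by metis
qed

lemma cone_comm_pow: assumes "contr I B" and "cone I B X s"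
  shows "eqm I (mm I X (mpow I B j)) (mm I (mpow I B j) X)"
  using assms(2)
proof (induction rule: cone.induct)
  case (cpow n) thus ?case using mpow_comm assms(1) contr_def by blast
next
  case czero thus ?case by (simp add: mm_zero_left mm_zero_right)
next
  case (cadd X s Y t) thus ?case by (simp add: mm_add_left mm_add_right eqm_def)
next
  case (cscale X s r) thus ?case by (simp add: mm_scale_left mm_scale_right eqm_def)
next
  case (ceq X s Y)
  have "eqm I (mm I Y (mpow I B j)) (mm I X (mpow I B j))" by (rule mm_cong[OF eqm_sym[OF ceq(2)] eqm_refl])
  also have "eqm I \<dots> (mm I (mpow I B j) X)" by (rule ceq.IH)
  also have "eqm I \<dots> (mm I (mpow I B j) Y)" by (rule mm_cong[OF eqm_refl ceq(2)])
  finally show ?case .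
qed

lemma cone_comm: assumes "contr I B" and "cone I B X s" and "cone I B Y t"
  shows "eqm I (mm I X Y) (mm I Y X)"
  using assms(3)
proof (induction rule: cone.induct)
  case (cpow n) thus ?case using cone_comm_pow[OF assms(1,2)] by blast
next
  case czero thus ?case by (simp add: mm_zero_left mm_zero_right)
next
  case (cadd X s Y t) thus ?case by (simp add: mm_add_left mm_add_right eqm_def)
next
  case (cscale X s r) thus ?case by (simp add: mm_scale_left mm_scale_right eqm_def)
next
  case (ceq Z s Y)
  have "eqm I (mm I X Y) (mm I X Z)" by (rule mm_cong[OF eqm_refl eqm_sym[OF ceq(2)]])
  also have "eqm I \<dots> (mm I Z X)" by (rule ceq.IH)
  also have "eqm I \<dots> (mm I Y X)" by (rule mm_cong[OF ceq(2) eqm_refl])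
  finally show ?case .
qed

lemma cone_mult_pow: assumes "contr I B" and "cone I B Y t"
  shows "cone I B (mm I (mpow I B i) Y) t"
  using assms(2)
proof (induction rule: cone.induct)
  case (cpow n)
  have fin: "finite I" using assms(1) by (simp add: contr_def)
  show ?case by (rule cone.ceq[OF cone.cpow mpow_add[OF fin]])
next
  case czero thus ?case by (simp add: mm_zero_right cone.czero)
next
  case (cadd X s Y t) thus ?case by (simp add: mm_add_right cone.cadd)
next
  case (cscale X s r) thus ?case by (simp add: mm_scale_right cone.cscale)
next
  case (ceq X s Y) show ?case by (rule cone.ceq[OF ceq.IH mm_cong[OF eqm_refl ceq(2)]])
qed

lemma cone_mult: assumes "contr I B" and "cone I B X s" and "cone I B Y t"
  shows "cone I B (mm I X Y) (s * t)"
  using assms(2)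
proof (induction rule: cone.induct)
  case (cpow n) thus ?case using cone_mult_pow[OF assms(1,3)] by simp
next
  case czero thus ?case by (simp add: mm_zero_left cone.czero)
next
  case (cadd X s Y' s') thus ?case by (simp add: mm_add_left cone.cadd distrib_right)
next
  case (cscale X s r) thus ?case by (simp add: mm_scale_left cone.cscale mult.assoc)
next
  case (ceq X s Y) show ?case by (rule cone.ceq[OF ceq.IH mm_cong[OF ceq(2) eqm_refl]])
qed

lemma adj_adj: "adj (adj X) = X" unfolding adj_def by simp

lemma fro_adj: "fro I (adj X) = fro I X"
  unfolding fro_def adj_def complex_mod_cnj by (rule sum.swap)

lemma qf_M: "qf I (mm I (adj X) X) v = complex_of_real (nrm2 I (mv I X v))"
  unfolding qf_ip mv_mm ip_adj adj_adj ip_self ..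

lemma nrm_M: "nrm2 I (mv I (mm I (adj X) X) v) \<le> fro I X * nrm2 I (mv I X v)"
  unfolding mv_mm fro_adj[of I X, symmetric] by (rule mv_fro)

lemma nrm2_expand: "nrm2 I (\<lambda>x. v x + complex_of_real r * w x) =
   nrm2 I v + 2 * r * Re (ip I v w) + r * r * nrm2 I w"
proof -
  have "complex_of_real (nrm2 I (\<lambda>x. v x + complex_of_real r * w x)) =
     ip I v v + of_real r * ip I v w + of_real r * ip I w v + of_real r * of_real r * ip I w w"
    unfolding ip_self[symmetric] ip_lin_left ip_lin_right by (simp add: algebra_simps)
  also have "\<dots> = of_real (nrm2 I v) + of_real r * (ip I v w + cnj (ip I v w)) + of_real (r * r * nrm2 I w)"
    by (simp add: ip_self ip_cnj[of I w v] algebra_simps)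
  also have "\<dots> = of_real (nrm2 I v + 2 * r * Re (ip I v w) + r * r * nrm2 I w)"
    by (simp add: complex_add_cnj)
  finally show ?thesis by (simp only: of_real_eq_iff)
qed

definition Bm :: "'i set \<Rightarrow> ('i \<Rightarrow> 'i \<Rightarrow> complex) \<Rightarrow> ('i \<Rightarrow> 'i \<Rightarrow> complex)" where
  "Bm I X = (\<lambda>a b. Idm a b - complex_of_real (1 / (fro I X + 1)) * mm I (adj X) X a b)"

lemma qf_Bm: assumes fin: "finite I" shows "qf I (Bm I X) v = complex_of_real (nrm2 I v - nrm2 I (mv I X v) / (fro I X + 1))"
proof -
  have "qf I (Bm I X) v = qf I Idm v - complex_of_real (1 / (fro I X + 1)) * qf I (mm I (adj X) X) v"
    unfolding Bm_def by (rule trans[OF qf_diff], subst qf_scale, rule refl)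
  also have "\<dots> = complex_of_real (nrm2 I v) - complex_of_real (1 / (fro I X + 1)) * complex_of_real (nrm2 I (mv I X v))"
    by (simp only: qf_Idm[OF fin] qf_M)
  also have "\<dots> = complex_of_real (nrm2 I v - nrm2 I (mv I X v) / (fro I X + 1))"
    by simp
  finally show ?thesis .
qed

lemma fro_nonneg: "0 \<le> fro I X" unfolding fro_def by (simp add: sum_nonneg)

lemma Bm_contr: assumes fin: "finite I" shows "contr I (Bm I X)"
proof -
  define c where "c = fro I X + 1"
  have c0: "c > 0" unfolding c_def using fro_nonneg[of I X] by linarith
  have Kc: "fro I X \<le> c" unfolding c_def by simp
  let ?M = "mm I (adj X) X"
  have qB: "qf I (Bm I X) v = complex_of_real (nrm2 I v - nrm2 I (mv I X v) / c)" for v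
    unfolding qf_Bm[OF fin] c_def ..
  have "psd I (Bm I X)" unfolding psd_qf
  proof
    fix v
    have "fro I X * nrm2 I v \<le> c * nrm2 I v" by (rule mult_right_mono[OF Kc nrm2_nonneg])
    hence "nrm2 I (mv I X v) \<le> nrm2 I v * c"
      using mv_fro[of I X v] by (simp add: mult.commute)
    hence "nrm2 I (mv I X v) / c \<le> nrm2 I v" by (simp only: pos_divide_le_eq[OF c0])
    thus "Im (qf I (Bm I X) v) = 0 \<and> 0 \<le> Re (qf I (Bm I X) v)" unfolding qB by simp
  qed
  moreover have "nrm2 I (mv I (Bm I X) v) \<le> nrm2 I v" for v
  proof -
    let ?w = "mv I ?M v"
    define n where "n = nrm2 I (mv I X v)"
    have n0: "0 \<le> n" unfolding n_def by (rule nrm2_nonneg)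
    have "nrm2 I (mv I (Bm I X) v) = nrm2 I (\<lambda>x. v x + complex_of_real (- 1 / c) * ?w x)"
    proof (rule nrm2_cong)
      fix a assume a: "a \<in> I"
      have "mv I (Bm I X) v a = (\<Sum>b\<in>I. Idm a b * v b - complex_of_real (1 / c) * (?M a b * v b))"
        unfolding Bm_def mv_def c_def by (simp only: left_diff_distrib mult.assoc)
      also have "\<dots> = mv I Idm v a - complex_of_real (1 / c) * ?w a"
        unfolding mv_def by (simp only: sum_subtractf sum_distrib_left)
      finally have "mv I (Bm I X) v a = mv I Idm v a - complex_of_real (1 / c) * ?w a" .
      thus "mv I (Bm I X) v a = v a + complex_of_real (- 1 / c) * ?w a"
        using mv_Idm[OF fin a] by (simp add: divide_inverse)
    qed
    also have "\<dots> = nrm2 I v + 2 * (- 1 / c) * n + (- 1 / c) * (- 1 / c) * nrm2 I ?w"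
      unfolding nrm2_expand qf_ip[symmetric] qf_M n_def by simp
    also have "\<dots> \<le> nrm2 I v"
    proof -
      have "fro I X * n \<le> c * n" by (rule mult_right_mono[OF Kc n0])
      hence w: "nrm2 I ?w \<le> c * n" using nrm_M[of I X v] unfolding n_def by linarith
      have "(- 1 / c) * (- 1 / c) * nrm2 I ?w = nrm2 I ?w / (c * c)" by simp
      also have "\<dots> \<le> (c * n) / (c * c)" by (rule divide_right_mono[OF w]) simp
      also have "\<dots> = n / c" using c0 by simp
      finally have "(- 1 / c) * (- 1 / c) * nrm2 I ?w \<le> n / c" .
      moreover have "0 \<le> n / c" using n0 c0 by simp
      moreover have "2 * (- 1 / c) * n = - 2 * (n / c)" by simp
      ultimately show ?thesis by linarith
    qed
    finally show ?thesis .
  qed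
  ultimately show ?thesis unfolding contr_def using fin by blast
qed

primrec Ys :: "'i set \<Rightarrow> ('i \<Rightarrow> 'i \<Rightarrow> complex) \<Rightarrow> nat \<Rightarrow> ('i \<Rightarrow> 'i \<Rightarrow> complex)" where
  "Ys I B 0 = (\<lambda>a b. 0)"
| "Ys I B (Suc k) = (\<lambda>a b. complex_of_real (1/2) * (B a b + mm I (Ys I B k) (Ys I B k) a b))"

primrec ys :: "nat \<Rightarrow> real" where
  "ys 0 = 0"
| "ys (Suc k) = (1/2) * (1 + ys k * ys k)"

lemma ys_bounds: "0 \<le> ys k \<and> ys k \<le> 1"
proof (induction k)
  case 0 thus ?case by simp
next
  case (Suc k)
  have "ys k * ys k \<le> 1" using Suc by (metis mult_le_one)
  thus ?case using Suc by (simp add: zero_le_mult_iff)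
qed

lemma Ys_cone: assumes "contr I B" shows "cone I B (Ys I B k) (ys k)"
proof (induction k)
  case 0 show ?case by (simp add: cone.czero)
next
  case (Suc k)
  have fin: "finite I" using assms by (simp add: contr_def)
  have c1: "cone I B B 1" by (rule cone.ceq[OF cone.cpow mpow_one[OF fin]])
  have c2: "cone I B (mm I (Ys I B k) (Ys I B k)) (ys k * ys k)" by (rule cone_mult[OF assms Suc Suc])
  have "cone I B (\<lambda>a b. complex_of_real (1/2) * (B a b + mm I (Ys I B k) (Ys I B k) a b)) ((1/2) * (1 + ys k * ys k))"
    by (rule cone.cscale[OF cone.cadd[OF c1 c2]]) simp
  thus ?case by simp
qed

lemma Ys_diff: assumes "contr I B" shows "cone I B (\<lambda>a b. Ys I B (Suc k) a b - Ys I B k a b) (ys (Suc k) - ys k)"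
proof (induction k)
  case 0
  have fin: "finite I" using assms by (simp add: contr_def)
  have c1: "cone I B B 1" by (rule cone.ceq[OF cone.cpow mpow_one[OF fin]])
  have "cone I B (\<lambda>a b. complex_of_real (1/2) * B a b) ((1/2) * 1)"
    by (rule cone.cscale[OF c1]) simp
  moreover have "(\<lambda>a b. Ys I B (Suc 0) a b - Ys I B 0 a b) = (\<lambda>a b. complex_of_real (1/2) * B a b)"
    by (simp add: mm_def)
  ultimately show ?case by simp
next
  case (Suc k)
  have fin: "finite I" using assms by (simp add: contr_def)
  let ?Y1 = "Ys I B (Suc k)" and ?Y0 = "Ys I B k"
  have cS: "cone I B (\<lambda>a b. ?Y1 a b + ?Y0 a b) (ys (Suc k) + ys k)"
    by (rule cone.cadd[OF Ys_cone[OF assms] Ys_cone[OF assms]])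
  have cP: "cone I B (mm I (\<lambda>a b. ?Y1 a b + ?Y0 a b) (\<lambda>a b. ?Y1 a b - ?Y0 a b)) ((ys (Suc k) + ys k) * (ys (Suc k) - ys k))"
    by (rule cone_mult[OF assms cS Suc])
  have cH: "cone I B (\<lambda>a b. complex_of_real (1/2) * mm I (\<lambda>a b. ?Y1 a b + ?Y0 a b) (\<lambda>a b. ?Y1 a b - ?Y0 a b) a b)
      ((1/2) * ((ys (Suc k) + ys k) * (ys (Suc k) - ys k)))"
    by (rule cone.cscale[OF cP]) simp
  have comm: "eqm I (mm I ?Y0 ?Y1) (mm I ?Y1 ?Y0)"
    by (rule cone_comm[OF assms Ys_cone[OF assms] Ys_cone[OF assms]])
  have e: "eqm I (\<lambda>a b. complex_of_real (1/2) * mm I (\<lambda>a b. ?Y1 a b + ?Y0 a b) (\<lambda>a b. ?Y1 a b - ?Y0 a b) a b)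
     (\<lambda>a b. Ys I B (Suc (Suc k)) a b - ?Y1 a b)"
    unfolding eqm_def
  proof (intro ballI)
    fix a b assume a: "a \<in> I" and b: "b \<in> I"
    have cab: "mm I ?Y0 ?Y1 a b = mm I ?Y1 ?Y0 a b" using comm a b unfolding eqm_def by blast
    have "mm I (\<lambda>a b. ?Y1 a b + ?Y0 a b) (\<lambda>a b. ?Y1 a b - ?Y0 a b) a b
        = mm I ?Y1 ?Y1 a b - mm I ?Y1 ?Y0 a b + (mm I ?Y0 ?Y1 a b - mm I ?Y0 ?Y0 a b)"
      by (simp only: mm_add_left mm_diff_right)
    also have "\<dots> = mm I ?Y1 ?Y1 a b - mm I ?Y0 ?Y0 a b" using cab by simp
    finally have m: "mm I (\<lambda>a b. ?Y1 a b + ?Y0 a b) (\<lambda>a b. ?Y1 a b - ?Y0 a b) a b = mm I ?Y1 ?Y1 a b - mm I ?Y0 ?Y0 a b" .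
    show "complex_of_real (1/2) * mm I (\<lambda>a b. ?Y1 a b + ?Y0 a b) (\<lambda>a b. ?Y1 a b - ?Y0 a b) a b =
          Ys I B (Suc (Suc k)) a b - ?Y1 a b"
      unfolding m by (simp only: Ys.simps) (simp add: algebra_simps)
  qed
  have "cone I B (\<lambda>a b. Ys I B (Suc (Suc k)) a b - ?Y1 a b) ((1/2) * ((ys (Suc k) + ys k) * (ys (Suc k) - ys k)))"
    by (rule cone.ceq[OF cH e])
  moreover have "(1/2) * ((ys (Suc k) + ys k) * (ys (Suc k) - ys k)) = ys (Suc (Suc k)) - ys (Suc k)"
    by (simp only: ys.simps) (simp add: algebra_simps)
  ultimately show ?case by (rule cone_val)
qed

lemma qf_Ys_facts: assumes "contr I B"
  shows "Im (qf I (Ys I B k) v) = 0" "Re (qf I (Ys I B k) v) \<le> nrm2 I v"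
    "Re (qf I (Ys I B k) v) \<le> Re (qf I (Ys I B (Suc k)) v)"
proof -
  have c: "psd I (Ys I B k) \<and> (\<forall>v. Re (qf I (Ys I B k) v) \<le> ys k * nrm2 I v)"
    by (rule cone_psd[OF assms Ys_cone[OF assms]])
  thus "Im (qf I (Ys I B k) v) = 0" unfolding psd_qf by blast
  have "ys k * nrm2 I v \<le> 1 * nrm2 I v" using ys_bounds[of k] nrm2_nonneg[of I v] by (intro mult_right_mono) auto
  moreover have "Re (qf I (Ys I B k) v) \<le> ys k * nrm2 I v" using c by blast
  ultimately show "Re (qf I (Ys I B k) v) \<le> nrm2 I v" by linarith
  have "psd I (\<lambda>a b. Ys I B (Suc k) a b - Ys I B k a b)"
    using cone_psd[OF assms Ys_diff[OF assms]] by blast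
  hence "0 \<le> Re (qf I (\<lambda>a b. Ys I B (Suc k) a b - Ys I B k a b) v)" unfolding psd_qf by blast
  thus "Re (qf I (Ys I B k) v) \<le> Re (qf I (Ys I B (Suc k)) v)" unfolding qf_diff by simp
qed

lemma qf_Ys_conv: assumes "contr I B" shows "\<exists>l. (\<lambda>k. qf I (Ys I B k) v) \<longlonglongrightarrow> l"
proof -
  define f where "f = (\<lambda>k. Re (qf I (Ys I B k) v))"
  have inc: "incseq f" unfolding f_def by (rule incseq_SucI) (rule qf_Ys_facts(3)[OF assms])
  have bdd: "bdd_above (range f)" unfolding f_def by (rule bdd_aboveI2[where M="nrm2 I v"]) (rule qf_Ys_facts(2)[OF assms])
  have "f \<longlonglongrightarrow> (SUP i. f i)" by (rule LIMSEQ_incseq_SUP[OF bdd inc])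
  hence "(\<lambda>k. complex_of_real (f k)) \<longlonglongrightarrow> complex_of_real (SUP i. f i)" by (rule tendsto_of_real)
  moreover have "complex_of_real (f k) = qf I (Ys I B k) v" for k
    unfolding f_def using qf_Ys_facts(1)[OF assms, of k v] by (simp add: complex_eq_iff)
  ultimately show ?thesis by auto
qed

lemma polar:
  assumes fin: "finite I" and a: "a \<in> I" and b: "b \<in> I" and ab: "a \<noteq> b"
  shows "A a b = ((qf I A (\<lambda>x. if x = a then 1 else if x = b then 1 else 0) - qf I A (\<lambda>x. if x = a then 1 else 0) - qf I A (\<lambda>x. if x = b then 1 else 0))
     - \<i> * (qf I A (\<lambda>x. if x = a then 1 else if x = b then \<i> else 0) - qf I A (\<lambda>x. if x = a then 1 else 0) - qf I A (\<lambda>x. if x = b then 1 else 0))) / 2"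
  unfolding qf_two[OF fin a b ab] qf_one[OF fin a] qf_one[OF fin b]
  by (simp add: algebra_simps)

lemma Ys_entry_conv: assumes "contr I B" and a: "a \<in> I" and b: "b \<in> I"
  shows "\<exists>l. (\<lambda>k. Ys I B k a b) \<longlonglongrightarrow> l"
proof -
  have fin: "finite I" using assms by (simp add: contr_def)
  show ?thesis
  proof (cases "a = b")
    case True
    obtain l where "(\<lambda>k. qf I (Ys I B k) (\<lambda>x. if x = a then 1 else 0)) \<longlonglongrightarrow> l"
      using qf_Ys_conv[OF assms(1)] by blast
    hence "(\<lambda>k. Ys I B k a a) \<longlonglongrightarrow> l" by (simp only: qf_one[OF fin a])
    thus ?thesis using True by blast
  next
    case False
    obtain l1 where l1: "(\<lambda>k. qf I (Ys I B k) (\<lambda>x. if x = a then 1 else if x = b then 1 else 0)) \<longlonglongrightarrow> l1"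
      using qf_Ys_conv[OF assms(1)] by blast
    obtain l2 where l2: "(\<lambda>k. qf I (Ys I B k) (\<lambda>x. if x = a then 1 else if x = b then \<i> else 0)) \<longlonglongrightarrow> l2"
      using qf_Ys_conv[OF assms(1)] by blast
    obtain l3 where l3: "(\<lambda>k. qf I (Ys I B k) (\<lambda>x. if x = a then 1 else 0)) \<longlonglongrightarrow> l3"
      using qf_Ys_conv[OF assms(1)] by blast
    obtain l4 where l4: "(\<lambda>k. qf I (Ys I B k) (\<lambda>x. if x = b then 1 else 0)) \<longlonglongrightarrow> l4"
      using qf_Ys_conv[OF assms(1)] by blast
    have "(\<lambda>k. ((qf I (Ys I B k) (\<lambda>x. if x = a then 1 else if x = b then 1 else 0) - qf I (Ys I B k) (\<lambda>x. if x = a then 1 else 0) - qf I (Ys I B k) (\<lambda>x. if x = b then 1 else 0))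
     - \<i> * (qf I (Ys I B k) (\<lambda>x. if x = a then 1 else if x = b then \<i> else 0) - qf I (Ys I B k) (\<lambda>x. if x = a then 1 else 0) - qf I (Ys I B k) (\<lambda>x. if x = b then 1 else 0))) / 2)
       \<longlonglongrightarrow> ((l1 - l3 - l4) - \<i> * (l2 - l3 - l4)) / 2"
      by (intro tendsto_intros l1 l2 l3 l4) simp
    thus ?thesis unfolding polar[OF fin a b False, symmetric] by blast
  qed
qed

definition Yinf :: "'i set \<Rightarrow> ('i \<Rightarrow> 'i \<Rightarrow> complex) \<Rightarrow> ('i \<Rightarrow> 'i \<Rightarrow> complex)" where
  "Yinf I B = (\<lambda>a b. lim (\<lambda>k. Ys I B k a b))"

lemma Ys_lim: assumes "contr I B" and "a \<in> I" and "b \<in> I"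
  shows "(\<lambda>k. Ys I B k a b) \<longlonglongrightarrow> Yinf I B a b"
  unfolding Yinf_def using Ys_entry_conv[OF assms] convergent_LIMSEQ_iff convergent_def by blast

lemma Yinf_fix: assumes "contr I B" and a: "a \<in> I" and b: "b \<in> I"
  shows "Yinf I B a b = complex_of_real (1/2) * (B a b + mm I (Yinf I B) (Yinf I B) a b)"
proof -
  have "(\<lambda>k. Ys I B (Suc k) a b) \<longlonglongrightarrow> Yinf I B a b" by (rule LIMSEQ_Suc[OF Ys_lim[OF assms]])
  moreover have "(\<lambda>k. Ys I B (Suc k) a b) \<longlonglongrightarrow> complex_of_real (1/2) * (B a b + mm I (Yinf I B) (Yinf I B) a b)"
    unfolding Ys.simps mm_def
    by (intro tendsto_intros Ys_lim[OF assms(1)] a b)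
  ultimately show ?thesis by (rule LIMSEQ_unique)
qed

lemma qf_Yinf: assumes "contr I B"
  shows "Im (qf I (Yinf I B) v) = 0" "Re (qf I (Yinf I B) v) \<le> nrm2 I v"
proof -
  have l: "(\<lambda>k. qf I (Ys I B k) v) \<longlonglongrightarrow> qf I (Yinf I B) v"
    unfolding qf_def by (intro tendsto_intros Ys_lim[OF assms])
  have "(\<lambda>k. Im (qf I (Ys I B k) v)) \<longlonglongrightarrow> Im (qf I (Yinf I B) v)" by (rule tendsto_Im[OF l])
  moreover have "(\<lambda>k. Im (qf I (Ys I B k) v)) = (\<lambda>k. 0)" using qf_Ys_facts(1)[OF assms] by simp
  ultimately show "Im (qf I (Yinf I B) v) = 0" using LIMSEQ_unique tendsto_const by metis
  show "Re (qf I (Yinf I B) v) \<le> nrm2 I v"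
    by (rule LIMSEQ_le_const2[OF tendsto_Re[OF l]]) (use qf_Ys_facts(2)[OF assms] in blast)
qed

lemma sqrt_exists: assumes fin: "finite I"
  shows "\<exists>P. (\<forall>a b. a \<notin> I \<or> b \<notin> I \<longrightarrow> P a b = 0) \<and> psd I P \<and>
            (\<forall>a\<in>I. \<forall>b\<in>I. mm I P P a b = mm I (adj X) X a b)"
proof -
  define c where "c = fro I X + 1"
  have c0: "c > 0" unfolding c_def using fro_nonneg[of I X] by linarith
  define B where "B = Bm I X"
  have ct: "contr I B" unfolding B_def by (rule Bm_contr[OF fin])
  define Y where "Y = Yinf I B"
  define Q where "Q = (\<lambda>a b. complex_of_real (sqrt c) * (Idm a b - Y a b))"
  define P where "P = (\<lambda>a b. if a \<in> I \<and> b \<in> I then Q a b else 0)"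
  have eQP: "eqm I Q P" unfolding eqm_def P_def by simp
  have psdQ: "psd I Q" unfolding psd_qf
  proof
    fix v
    have "qf I Q v = complex_of_real (sqrt c) * (complex_of_real (nrm2 I v) - qf I Y v)"
      unfolding Q_def qf_scale qf_diff qf_Idm[OF fin] ..
    moreover have "Im (qf I Y v) = 0" "Re (qf I Y v) \<le> nrm2 I v"
      unfolding Y_def by (rule qf_Yinf[OF ct])+
    ultimately show "Im (qf I Q v) = 0 \<and> 0 \<le> Re (qf I Q v)" using c0 by simp
  qed
  have mmQ: "mm I Q Q a b = mm I (adj X) X a b" if a: "a \<in> I" and b: "b \<in> I" for a b
  proof -
    have "mm I Q Q a b = complex_of_real (sqrt c) * complex_of_real (sqrt c) *
        (mm I Idm Idm a b - mm I Idm Y a b - (mm I Y Idm a b - mm I Y Y a b))"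
      unfolding Q_def by (simp only: mm_scale_left mm_scale_right mm_diff_left mm_diff_right mult.assoc)
    also have "\<dots> = complex_of_real c * (Idm a b - Y a b - (Y a b - mm I Y Y a b))"
      using c0 by (simp add: mm_Idm_left[OF fin a] mm_Idm_right[OF fin b] flip: of_real_mult)
    also have "mm I Y Y a b = 2 * Y a b - B a b"
      using Yinf_fix[OF ct a b] unfolding Y_def by (simp add: field_simps)
    also have "complex_of_real c * (Idm a b - Y a b - (Y a b - (2 * Y a b - B a b))) = complex_of_real c * (Idm a b - B a b)"
      by (simp add: algebra_simps)
    also have "\<dots> = complex_of_real c * (complex_of_real (1/c) * mm I (adj X) X a b)"
      unfolding B_def Bm_def c_def by simp
    also have "\<dots> = complex_of_real (c * (1/c)) * mm I (adj X) X a b"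
      by (simp only: of_real_mult mult.assoc)
    also have "\<dots> = mm I (adj X) X a b" using c0 by simp
    finally show ?thesis .
  qed
  have "psd I P" by (rule psd_cong[OF eQP psdQ])
  moreover have "\<forall>a\<in>I. \<forall>b\<in>I. mm I P P a b = mm I (adj X) X a b"
    using mm_cong[OF eQP eQP] mmQ unfolding eqm_def by simp
  moreover have "\<forall>a b. a \<notin> I \<or> b \<notin> I \<longrightarrow> P a b = 0" unfolding P_def by auto
  ultimately show ?thesis by blast
qed

lemma abs_op_props: assumes fin: "finite I"
  shows "(\<forall>a b. a \<notin> I \<or> b \<notin> I \<longrightarrow> abs_op I X a b = 0) \<and> psd I (abs_op I X) \<and>
    (\<forall>a\<in>I. \<forall>b\<in>I. mm I (abs_op I X) (abs_op I X) a b = mm I (adj X) X a b)"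
proof -
  let ?R = "\<lambda>P. (\<forall>a b. a \<notin> I \<or> b \<notin> I \<longrightarrow> P a b = 0) \<and> psd I P \<and>
            (\<forall>a\<in>I. \<forall>b\<in>I. mm I P P a b = mm I (adj X) X a b)"
  have "\<exists>!P. ?R P"
  proof (rule ex_ex1I)
    show "\<exists>P. ?R P" by (rule sqrt_exists[OF fin])
  next
    fix P Q assume P: "?R P" and Q: "?R Q"
    have "\<forall>a\<in>I. \<forall>b\<in>I. P a b = Q a b"
      by (rule sqrt_unique[OF fin]) (use P Q in auto)
    thus "P = Q" using P Q by (intro ext) (metis)
  qed
  from theI'[OF this] show ?thesis unfolding abs_op_def .
qed

lemma trace_norm_bound:
  assumes fin: "finite I" and d0: "0 \<le> \<delta>" and bd: "\<forall>a\<in>I. \<forall>b\<in>I. cmod (X a b) \<le> \<delta>"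
  shows "0 \<le> trace_norm I X \<and> trace_norm I X \<le> real (card I) * (sqrt (real (card I)) * \<delta>)"
proof -
  define P where "P = abs_op I X"
  have pr: "psd I P" "\<forall>a\<in>I. \<forall>b\<in>I. mm I P P a b = mm I (adj X) X a b"
    using abs_op_props[OF fin, of X] unfolding P_def by auto
  have hP: "herm I P" by (rule psd_herm[OF pr(1) fin])
  have diag: "0 \<le> Re (P a a) \<and> Re (P a a) \<le> sqrt (real (card I)) * \<delta>" if a: "a \<in> I" for a
  proof -
    have nn: "0 \<le> Re (P a a)" using pr(1) qf_one[OF fin a, of P] unfolding psd_qf by metis
    have "(Re (P a a))\<^sup>2 \<le> (cmod (P a a))\<^sup>2"
      using abs_Re_le_cmod[of "P a a"] nn by (simp add: power_mono)
    also have "\<dots> \<le> (\<Sum>b\<in>I. (cmod (P a b))\<^sup>2)"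
      by (rule member_le_sum[OF a]) (auto simp: fin)
    also have "\<dots> = Re (mm I P P a a)"
    proof -
      have "mm I P P a a = (\<Sum>b\<in>I. complex_of_real ((cmod (P a b))\<^sup>2))"
        unfolding mm_def
      proof (rule sum.cong)
        fix b assume b: "b \<in> I"
        have "P b a = cnj (P a b)" using hP a b unfolding herm_def by blast
        thus "P a b * P b a = complex_of_real ((cmod (P a b))\<^sup>2)" by (simp only: complex_norm_square)
      qed simp
      thus ?thesis by (simp only: Re_sum Re_complex_of_real)
    qed
    also have "\<dots> = Re (mm I (adj X) X a a)" using pr(2) a by simp
    also have "\<dots> = (\<Sum>c\<in>I. (cmod (X c a))\<^sup>2)"
    proof -
      have "mm I (adj X) X a a = (\<Sum>c\<in>I. complex_of_real ((cmod (X c a))\<^sup>2))"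
        unfolding mm_def adj_def
        by (rule sum.cong) (simp_all only: complex_norm_square mult.commute)
      thus ?thesis by (simp only: Re_sum Re_complex_of_real)
    qed
    also have "\<dots> \<le> (\<Sum>c\<in>I. \<delta>\<^sup>2)"
      by (rule sum_mono) (use bd a in \<open>auto intro: power_mono\<close>)
    also have "\<dots> = (sqrt (real (card I)) * \<delta>)\<^sup>2" by (simp add: power_mult_distrib)
    finally have "(Re (P a a))\<^sup>2 \<le> (sqrt (real (card I)) * \<delta>)\<^sup>2" .
    hence "Re (P a a) \<le> sqrt (real (card I)) * \<delta>"
      by (rule power2_le_imp_le) (use d0 in simp)
    thus ?thesis using nn by simp
  qed
  have tn: "trace_norm I X = (\<Sum>a\<in>I. Re (P a a))"
    unfolding trace_norm_def tr_def P_def by (simp only: Re_sum)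
  have "0 \<le> (\<Sum>a\<in>I. Re (P a a))" by (rule sum_nonneg) (use diag in blast)
  moreover have "(\<Sum>a\<in>I. Re (P a a)) \<le> (\<Sum>a\<in>I. sqrt (real (card I)) * \<delta>)" by (rule sum_mono) (use diag in blast)
  ultimately show ?thesis unfolding tn by simp
qed

definition n1 :: "'i set \<Rightarrow> ('i \<Rightarrow> 'i \<Rightarrow> complex) \<Rightarrow> real" where
  "n1 I X = (\<Sum>a\<in>I. \<Sum>b\<in>I. cmod (X a b))"

lemma n1_nonneg: "0 \<le> n1 I X" unfolding n1_def by (simp add: sum_nonneg)

lemma n1_cong: "(\<And>a b. a \<in> I \<Longrightarrow> b \<in> I \<Longrightarrow> X a b = Y a b) \<Longrightarrow> n1 I X = n1 I Y"
  unfolding n1_def by (auto intro!: sum.cong)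

lemma n1_entry: "finite I \<Longrightarrow> a \<in> I \<Longrightarrow> b \<in> I \<Longrightarrow> cmod (X a b) \<le> n1 I X"
proof -
  assume fin: "finite I" and a: "a \<in> I" and b: "b \<in> I"
  have "cmod (X a b) \<le> (\<Sum>b\<in>I. cmod (X a b))" by (rule member_le_sum[OF b]) (auto simp: fin)
  also have "\<dots> \<le> n1 I X" unfolding n1_def by (rule member_le_sum[OF a]) (auto simp: fin sum_nonneg)
  finally show ?thesis .
qed

lemma n1_add: "n1 I (\<lambda>a b. X a b + Y a b) \<le> n1 I X + n1 I Y"
  unfolding n1_def by (simp add: sum.distrib[symmetric] sum_mono norm_triangle_ineq)

lemma n1_diff: "n1 I (\<lambda>a b. X a b - Y a b) \<le> n1 I X + n1 I Y"
  unfolding n1_def by (simp add: sum.distrib[symmetric] sum_mono norm_triangle_ineq4)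

lemma n1_scale: "n1 I (\<lambda>a b. r * X a b) = cmod r * n1 I X"
  unfolding n1_def by (simp add: norm_mult sum_distrib_left)

lemma n1_sum: "n1 I (\<lambda>a b. \<Sum>k\<in>S. F k a b) \<le> (\<Sum>k\<in>S. n1 I (F k))"
proof -
  have "n1 I (\<lambda>a b. \<Sum>k\<in>S. F k a b) \<le> (\<Sum>a\<in>I. \<Sum>b\<in>I. \<Sum>k\<in>S. cmod (F k a b))"
    unfolding n1_def by (intro sum_mono norm_sum)
  also have "\<dots> = (\<Sum>k\<in>S. n1 I (F k))" unfolding n1_def
    by (simp add: sum.swap[of _ S])
  finally show ?thesis .
qed

definition ebd :: "'i set \<Rightarrow> ('i \<Rightarrow> 'i \<Rightarrow> complex) \<Rightarrow> real \<Rightarrow> bool" where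
  "ebd I A c = (\<forall>a\<in>I. \<forall>b\<in>I. cmod (A a b) \<le> c)"

lemma n1_mm_left: assumes "ebd I A c" "finite I" shows "n1 I (mm I A X) \<le> c * real (card I) * n1 I X"
proof -
  have "n1 I (mm I A X) \<le> (\<Sum>a\<in>I. \<Sum>b\<in>I. \<Sum>x\<in>I. c * cmod (X x b))"
    unfolding n1_def mm_def
  proof (intro sum_mono)
    fix a b assume a: "a \<in> I"
    have "cmod (\<Sum>x\<in>I. A a x * X x b) \<le> (\<Sum>x\<in>I. cmod (A a x) * cmod (X x b))"
      by (rule order_trans[OF norm_sum]) (simp add: norm_mult)
    also have "\<dots> \<le> (\<Sum>x\<in>I. c * cmod (X x b))"
      by (rule sum_mono, rule mult_right_mono) (use assms a in \<open>auto simp: ebd_def\<close>)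
    finally show "cmod (\<Sum>x\<in>I. A a x * X x b) \<le> (\<Sum>x\<in>I. c * cmod (X x b))" .
  qed
  also have "\<dots> = real (card I) * (c * (\<Sum>b\<in>I. \<Sum>x\<in>I. cmod (X x b)))"
    by (simp add: sum_distrib_left)
  also have "(\<Sum>b\<in>I. \<Sum>x\<in>I. cmod (X x b)) = n1 I X" unfolding n1_def by (rule sum.swap)
  finally show ?thesis by (simp add: mult_ac)
qed

lemma n1_mm_right: assumes "ebd I A c" "finite I" shows "n1 I (mm I X A) \<le> c * real (card I) * n1 I X"
proof -
  have "n1 I (mm I X A) \<le> (\<Sum>a\<in>I. \<Sum>b\<in>I. \<Sum>x\<in>I. c * cmod (X a x))"
    unfolding n1_def mm_def
  proof (intro sum_mono)
    fix a b assume b: "b \<in> I"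
    have "cmod (\<Sum>x\<in>I. X a x * A x b) \<le> (\<Sum>x\<in>I. cmod (X a x) * cmod (A x b))"
      by (rule order_trans[OF norm_sum]) (simp add: norm_mult)
    also have "\<dots> \<le> (\<Sum>x\<in>I. c * cmod (X a x))"
    proof (rule sum_mono)
      fix x assume x: "x \<in> I"
      have "cmod (X a x) * cmod (A x b) \<le> cmod (X a x) * c"
        by (rule mult_left_mono) (use assms b x in \<open>auto simp: ebd_def\<close>)
      thus "cmod (X a x) * cmod (A x b) \<le> c * cmod (X a x)" by (simp add: mult.commute)
    qed
    finally show "cmod (\<Sum>x\<in>I. X a x * A x b) \<le> (\<Sum>x\<in>I. c * cmod (X a x))" .
  qed
  also have "\<dots> = real (card I) * (c * n1 I X)"
    unfolding n1_def by (simp add: sum_distrib_left)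
  finally show ?thesis by (simp add: mult_ac)
qed

lemma ebd_mm: assumes "ebd I A c1" "ebd I B c2" "0 \<le> c1" shows "ebd I (mm I A B) (real (card I) * c1 * c2)"
  unfolding ebd_def
proof (intro ballI)
  fix a b assume a: "a \<in> I" and b: "b \<in> I"
  have "cmod (mm I A B a b) \<le> (\<Sum>x\<in>I. cmod (A a x) * cmod (B x b))"
    unfolding mm_def by (rule order_trans[OF norm_sum]) (simp add: norm_mult)
  also have "\<dots> \<le> (\<Sum>x\<in>I. c1 * c2)"
    by (rule sum_mono, rule mult_mono) (use assms a b in \<open>auto simp: ebd_def\<close>)
  finally show "cmod (mm I A B a b) \<le> real (card I) * c1 * c2" by simp
qed

lemma ebd_adj: "ebd I A c \<Longrightarrow> ebd I (adj A) c"
  unfolding ebd_def adj_def by simp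

lemma ebd_add: "ebd I A c1 \<Longrightarrow> ebd I B c2 \<Longrightarrow> ebd I (\<lambda>a b. A a b + B a b) (c1 + c2)"
  unfolding ebd_def by (meson add_mono norm_triangle_le)

lemma comm_bd: assumes "ebd I A c" "finite I"
  shows "n1 I (comm I A X) \<le> 2 * c * real (card I) * n1 I X"
proof -
  have "n1 I (comm I A X) \<le> n1 I (mm I A X) + n1 I (mm I X A)" unfolding comm_def by (rule n1_diff)
  also have "\<dots> \<le> c * real (card I) * n1 I X + c * real (card I) * n1 I X"
    by (intro add_mono n1_mm_left n1_mm_right assms)
  finally show ?thesis by (simp add: mult_ac)
qed

lemma dterm_bd: assumes "ebd I A c" "ebd I B c" "0 \<le> c" "finite I"
  shows "n1 I (dterm I A B X) \<le> 2 * (c * real (card I)) ^ 2 * n1 I X"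
proof -
  let ?n = "real (card I)"
  have eBA: "ebd I (mm I (adj B) A) (?n * c * c)" by (rule ebd_mm[OF ebd_adj[OF assms(2)] assms(1) assms(3)])
  have 1: "n1 I (mm I (mm I A X) (adj B)) \<le> (c * ?n) ^ 2 * n1 I X"
  proof -
    have "n1 I (mm I (mm I A X) (adj B)) \<le> c * ?n * n1 I (mm I A X)" by (rule n1_mm_right[OF ebd_adj[OF assms(2)] assms(4)])
    also have "\<dots> \<le> c * ?n * (c * ?n * n1 I X)"
      by (rule mult_left_mono[OF n1_mm_left[OF assms(1) assms(4)]]) (use assms(3) in simp)
    finally show ?thesis by (simp add: power2_eq_square mult_ac)
  qed
  have 2: "n1 I (mm I (mm I (adj B) A) X) \<le> (c * ?n) ^ 2 * n1 I X"
    using n1_mm_left[OF eBA assms(4), of X] by (simp add: power2_eq_square mult_ac)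
  have 3: "n1 I (mm I X (mm I (adj B) A)) \<le> (c * ?n) ^ 2 * n1 I X"
    using n1_mm_right[OF eBA assms(4), of X] by (simp add: power2_eq_square mult_ac)
  have "n1 I (dterm I A B X) \<le> n1 I (mm I (mm I A X) (adj B)) +
      n1 I (\<lambda>a b. (1/2) * (mm I (mm I (adj B) A) X a b + mm I X (mm I (adj B) A) a b))"
    unfolding dterm_def by (rule n1_diff)
  also have "n1 I (\<lambda>a b. (1/2) * (mm I (mm I (adj B) A) X a b + mm I X (mm I (adj B) A) a b))
      = (1/2) * n1 I (\<lambda>a b. mm I (mm I (adj B) A) X a b + mm I X (mm I (adj B) A) a b)"
    by (subst n1_scale) simp
  also have "n1 I (\<lambda>a b. mm I (mm I (adj B) A) X a b + mm I X (mm I (adj B) A) a b) \<le> 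
      n1 I (mm I (mm I (adj B) A) X) + n1 I (mm I X (mm I (adj B) A))" by (rule n1_add)
  finally have "n1 I (dterm I A B X) \<le> n1 I (mm I (mm I A X) (adj B)) +
      1 / 2 * (n1 I (mm I (mm I (adj B) A) X) + n1 I (mm I X (mm I (adj B) A)))" by simp
  moreover have ar: "x \<le> y + 1/2*(z+w) \<Longrightarrow> y \<le> q \<Longrightarrow> z \<le> q \<Longrightarrow> w \<le> q \<Longrightarrow> x \<le> 2*q"
    for x y z w q :: real by argo
  ultimately have "n1 I (dterm I A B X) \<le> 2 * ((c * real (card I)) ^ 2 * n1 I X)" using 1 2 3 by blast
  thus ?thesis by (simp add: mult.assoc)
qed

lemma iter_pow_bound:
  assumes b: "\<And>X. n1 I (\<Phi> X) \<le> K * n1 I X" and K0: "0 \<le> K"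
  shows "n1 I ((\<Phi> ^^ n) X) \<le> K ^ n * n1 I X"
proof (induction n)
  case 0 thus ?case by simp
next
  case (Suc n)
  have "n1 I ((\<Phi> ^^ Suc n) X) \<le> K * n1 I ((\<Phi> ^^ n) X)" using b by simp
  also have "\<dots> \<le> K * (K ^ n * n1 I X)" by (rule mult_left_mono[OF Suc K0])
  finally show ?case by (simp add: mult.assoc)
qed

lemma iter_diff_bound:
  assumes lin: "\<And>X Y a b. a \<in> I \<Longrightarrow> b \<in> I \<Longrightarrow> \<Phi>1 (\<lambda>a b. X a b - Y a b) a b = \<Phi>1 X a b - \<Phi>1 Y a b"
    and b1: "\<And>X. n1 I (\<Phi>1 X) \<le> K * n1 I X" and b2: "\<And>X. n1 I (\<Phi>2 X) \<le> K * n1 I X"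
    and sp: "\<And>X a b. a \<in> I \<Longrightarrow> b \<in> I \<Longrightarrow> \<Phi>1 X a b = \<Phi>2 X a b + e * Pp X a b"
    and bP: "\<And>X. n1 I (Pp X) \<le> KP * n1 I X" and K1: "1 \<le> K" and KP0: "0 \<le> KP"
  shows "n1 I (\<lambda>a b. (\<Phi>1 ^^ n) X a b - (\<Phi>2 ^^ n) X a b) \<le> real n * K ^ n * (cmod e * KP * n1 I X)"
proof (induction n)
  case 0 thus ?case by (simp add: n1_def)
next
  case (Suc n)
  define E where "E = cmod e * KP * n1 I X"
  have E0: "0 \<le> E" unfolding E_def using KP0 n1_nonneg[of I X] by simp
  let ?D = "\<lambda>a b. (\<Phi>1 ^^ n) X a b - (\<Phi>2 ^^ n) X a b"
  have eq: "(\<Phi>1 ^^ Suc n) X a b - (\<Phi>2 ^^ Suc n) X a b = \<Phi>1 ?D a b + e * Pp ((\<Phi>2 ^^ n) X) a b"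
    if a: "a \<in> I" and b: "b \<in> I" for a b
    using lin[OF a b, of "(\<Phi>1 ^^ n) X" "(\<Phi>2 ^^ n) X"] sp[OF a b, of "(\<Phi>2 ^^ n) X"] by simp
  have "n1 I (\<lambda>a b. (\<Phi>1 ^^ Suc n) X a b - (\<Phi>2 ^^ Suc n) X a b) = n1 I (\<lambda>a b. \<Phi>1 ?D a b + e * Pp ((\<Phi>2 ^^ n) X) a b)"
    by (rule n1_cong) (rule eq)
  also have "\<dots> \<le> n1 I (\<Phi>1 ?D) + n1 I (\<lambda>a b. e * Pp ((\<Phi>2 ^^ n) X) a b)" by (rule n1_add)
  also have "n1 I (\<lambda>a b. e * Pp ((\<Phi>2 ^^ n) X) a b) = cmod e * n1 I (Pp ((\<Phi>2 ^^ n) X))" by (rule n1_scale)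
  also have "\<dots> \<le> cmod e * (KP * (K ^ n * n1 I X))"
  proof -
    have "n1 I (Pp ((\<Phi>2 ^^ n) X)) \<le> KP * n1 I ((\<Phi>2 ^^ n) X)" by (rule bP)
    also have "\<dots> \<le> KP * (K ^ n * n1 I X)"
      by (rule mult_left_mono[OF iter_pow_bound[OF b2] KP0]) (use K1 in simp)
    finally show ?thesis by (rule mult_left_mono) simp
  qed
  also have "n1 I (\<Phi>1 ?D) \<le> K * n1 I ?D" by (rule b1)
  also have "K * n1 I ?D \<le> K * (real n * K ^ n * E)"
    by (rule mult_left_mono[OF Suc[unfolded E_def[symmetric]]]) (use K1 in simp)
  finally have "n1 I (\<lambda>a b. (\<Phi>1 ^^ Suc n) X a b - (\<Phi>2 ^^ Suc n) X a b) \<le> real n * K ^ Suc n * E + K ^ n * E"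
    unfolding E_def by (simp add: mult_ac)
  also have "K ^ n * E \<le> K ^ Suc n * E"
    by (rule mult_right_mono[OF _ E0]) (use K1 in \<open>simp add: power_increasing\<close>)
  finally show ?case unfolding E_def by (simp add: algebra_simps)
qed

lemma sexp_diff_bound:
  assumes lin: "\<And>X Y a b. a \<in> I \<Longrightarrow> b \<in> I \<Longrightarrow> \<Phi>1 (\<lambda>a b. X a b - Y a b) a b = \<Phi>1 X a b - \<Phi>1 Y a b"
    and b1: "\<And>X. n1 I (\<Phi>1 X) \<le> K * n1 I X" and b2: "\<And>X. n1 I (\<Phi>2 X) \<le> K * n1 I X"
    and sp: "\<And>X a b. a \<in> I \<Longrightarrow> b \<in> I \<Longrightarrow> \<Phi>1 X a b = \<Phi>2 X a b + e * Pp X a b"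
    and bP: "\<And>X. n1 I (Pp X) \<le> KP * n1 I X" and K1: "1 \<le> K" and KP0: "0 \<le> KP"
    and fin: "finite I" and a: "a \<in> I" and b: "b \<in> I" and t0: "0 \<le> t"
  shows "cmod (sexp t \<Phi>1 X a b - sexp t \<Phi>2 X a b) \<le>
    cmod e * KP * n1 I X * (\<Sum>n. inverse (fact n) * (2 * K * t) ^ n)"
proof -
  define f1 where "f1 = (\<lambda>n. complex_of_real (t ^ n / fact n) * (\<Phi>1 ^^ n) X a b)"
  define f2 where "f2 = (\<lambda>n. complex_of_real (t ^ n / fact n) * (\<Phi>2 ^^ n) X a b)"
  define E where "E = cmod e * KP * n1 I X"
  have E0: "0 \<le> E" unfolding E_def using KP0 n1_nonneg[of I X] by simp
  have sg: "summable (\<lambda>n. inverse (fact n) * (K * t) ^ n)" by (rule summable_exp)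
  have s2g: "summable (\<lambda>n. inverse (fact n) * (2 * K * t) ^ n)" by (rule summable_exp)
  have fb: "cmod (complex_of_real (t ^ n / fact n) * (\<Phi> ^^ n) X a b) \<le> n1 I X * (inverse (fact n) * (K * t) ^ n)"
    if bb: "\<And>X. n1 I (\<Phi> X) \<le> K * n1 I X" for \<Phi> :: "('a \<Rightarrow> 'a \<Rightarrow> complex) \<Rightarrow> ('a \<Rightarrow> 'a \<Rightarrow> complex)" and n
  proof -
    have "cmod ((\<Phi> ^^ n) X a b) \<le> n1 I ((\<Phi> ^^ n) X)" by (rule n1_entry[OF fin a b])
    also have "\<dots> \<le> K ^ n * n1 I X" by (rule iter_pow_bound[OF bb]) (use K1 in simp)
    finally have "cmod ((\<Phi> ^^ n) X a b) \<le> K ^ n * n1 I X" .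
    hence "t ^ n / fact n * cmod ((\<Phi> ^^ n) X a b) \<le> t ^ n / fact n * (K ^ n * n1 I X)"
      by (rule mult_left_mono) (use t0 in simp)
    moreover have "cmod (complex_of_real (t ^ n / fact n) * (\<Phi> ^^ n) X a b) = t ^ n / fact n * cmod ((\<Phi> ^^ n) X a b)"
    proof -
      have nn: "0 \<le> t ^ n / fact n" using t0 by simp
      show ?thesis by (simp only: norm_mult norm_of_real abs_of_nonneg[OF nn])
    qed
    moreover have "t ^ n / fact n * (K ^ n * n1 I X) = n1 I X * (inverse (fact n) * (K * t) ^ n)"
      by (simp add: power_mult_distrib mult_ac divide_inverse)
    ultimately show ?thesis by simp
  qed
  have sf1: "summable f1" unfolding f1_def
    by (rule summable_comparison_test[OF _ summable_mult[OF sg, of "n1 I X"]]) (use fb[OF b1] in blast)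
  have sf2: "summable f2" unfolding f2_def
    by (rule summable_comparison_test[OF _ summable_mult[OF sg, of "n1 I X"]]) (use fb[OF b2] in blast)
  have "sexp t \<Phi>1 X a b - sexp t \<Phi>2 X a b = suminf f1 - suminf f2"
    unfolding sexp_def f1_def f2_def ..
  also have "\<dots> = (\<Sum>n. f1 n - f2 n)" by (rule suminf_diff[OF sf1 sf2])
  finally have eq: "sexp t \<Phi>1 X a b - sexp t \<Phi>2 X a b = (\<Sum>n. f1 n - f2 n)" .
  have db: "cmod (f1 n - f2 n) \<le> E * (inverse (fact n) * (2 * K * t) ^ n)" for n
  proof -
    have "f1 n - f2 n = complex_of_real (t ^ n / fact n) * ((\<Phi>1 ^^ n) X a b - (\<Phi>2 ^^ n) X a b)"
      unfolding f1_def f2_def by (simp add: algebra_simps)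
    moreover have nn: "0 \<le> t ^ n / fact n" using t0 by simp
    ultimately have "cmod (f1 n - f2 n) = t ^ n / fact n * cmod ((\<Phi>1 ^^ n) X a b - (\<Phi>2 ^^ n) X a b)"
      by (simp only: norm_mult norm_of_real abs_of_nonneg[OF nn])
    also have "\<dots> \<le> t ^ n / fact n * (real n * K ^ n * E)"
    proof (rule mult_left_mono)
      have "cmod ((\<Phi>1 ^^ n) X a b - (\<Phi>2 ^^ n) X a b) \<le> n1 I (\<lambda>a b. (\<Phi>1 ^^ n) X a b - (\<Phi>2 ^^ n) X a b)"
        by (rule n1_entry[OF fin a b])
      also have "\<dots> \<le> real n * K ^ n * E" unfolding E_def by (rule iter_diff_bound[OF lin b1 b2 sp bP K1 KP0])
      finally show "cmod ((\<Phi>1 ^^ n) X a b - (\<Phi>2 ^^ n) X a b) \<le> real n * K ^ n * E" .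
    qed (use t0 in simp)
    also have "\<dots> \<le> t ^ n / fact n * (2 ^ n * K ^ n * E)"
    proof (rule mult_left_mono)
      have "real n \<le> 2 ^ n"
        by (metis of_nat_le_iff of_nat_numeral of_nat_power less_exp less_imp_le)
      thus "real n * K ^ n * E \<le> 2 ^ n * K ^ n * E"
        by (intro mult_right_mono E0) (use K1 in auto)
    qed (use t0 in simp)
    also have "\<dots> = E * (inverse (fact n) * (2 * K * t) ^ n)"
      by (simp add: power_mult_distrib divide_inverse mult_ac)
    finally show ?thesis .
  qed
  have "cmod (\<Sum>n. f1 n - f2 n) \<le> (\<Sum>n. E * (inverse (fact n) * (2 * K * t) ^ n))"
    by (rule norm_suminf_le[OF db summable_mult[OF s2g]])
  also have "\<dots> = E * (\<Sum>n. inverse (fact n) * (2 * K * t) ^ n)" by (rule suminf_mult[OF s2g])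
  finally show ?thesis unfolding eq E_def .
qed

lemma Gamma_lists: "Gamma d M = {xs. set xs \<subseteq> {1..M} \<and> length xs = d}"
  unfolding Gamma_def by (auto simp: in_set_conv_nth subset_iff)

lemma Gamma_finite: "finite (Gamma d M)"
  unfolding Gamma_lists by (rule finite_lists_length_eq) simp

lemma Gamma_card: "card (Gamma d M) = M ^ d"
  unfolding Gamma_lists by (subst card_lists_length_eq) simp_all

lemma Gamma_mono: "M \<le> M' \<Longrightarrow> Gamma d M \<subseteq> Gamma d M'"
  unfolding Gamma_def by auto

lemma cdist_bounds:
  assumes "1 \<le> x" "x \<le> M" "M < L"
  shows "1 \<le> cdist per L x 0 \<and> cdist per L x 0 \<le> real M"
  using assms unfolding cdist_def by (auto simp: min_def)

lemma gnorm_bounds: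
  assumes d: "1 \<le> d" and r: "r \<in> Gamma d M" and hML: "M < L"
  shows "1 \<le> gnorm per L d r (replicate d 0) \<and> gnorm per L d r (replicate d 0) \<le> sqrt (real d) * real M"
proof -
  have cb: "1 \<le> cdist per L (r ! i) (replicate d 0 ! i) \<and> cdist per L (r ! i) (replicate d 0 ! i) \<le> real M" if "i < d" for i
    using r that hML cdist_bounds[of "r ! i" M L per] unfolding Gamma_def by auto
  define S where "S = (\<Sum>i<d. (cdist per L (r ! i) (replicate d 0 ! i))\<^sup>2)"
  have "1 \<le> (cdist per L (r ! 0) (replicate d 0 ! 0))\<^sup>2" using cb[of 0] d by simp
  also have "\<dots> \<le> S" unfolding S_def by (rule member_le_sum) (use d in auto)
  finally have S1: "1 \<le> S" .
  have "S \<le> (\<Sum>i<d. (real M)\<^sup>2)" unfolding S_def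
  proof (rule sum_mono)
    fix i assume "i \<in> {..<d}"
    hence "1 \<le> cdist per L (r ! i) (replicate d 0 ! i) \<and> cdist per L (r ! i) (replicate d 0 ! i) \<le> real M"
      using cb by simp
    thus "(cdist per L (r ! i) (replicate d 0 ! i))\<^sup>2 \<le> (real M)\<^sup>2" by (intro power_mono) auto
  qed
  also have "\<dots> = (sqrt (real d) * real M)\<^sup>2" by (simp add: power_mult_distrib)
  finally have S2: "S \<le> (sqrt (real d) * real M)\<^sup>2" .
  have "gnorm per L d r (replicate d 0) = sqrt S" unfolding gnorm_def S_def ..
  moreover have "sqrt S \<le> sqrt (real d) * real M"
  proof -
    have "sqrt S \<le> sqrt ((sqrt (real d) * real M)\<^sup>2)" using S2 by (rule real_sqrt_le_mono)
    thus ?thesis by simp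
  qed
  moreover have "1 \<le> sqrt S" using S1 by simp
  ultimately show ?thesis by simp
qed

definition kc0 :: "nat \<Rightarrow> real" where "kc0 d = 1 / (2 * sqrt (real d) ^ d)"

lemma kc0_pos: "1 \<le> d \<Longrightarrow> kc0 d > 0" unfolding kc0_def by simp

lemma shell_bound:
  assumes d: "1 \<le> d" and a0: "0 \<le> \<alpha>" and ad: "\<alpha> \<le> real d" and L: "2 ^ Suc j < L"
  shows "kc0 d \<le> (\<Sum>r\<in>Gamma d (2 ^ Suc j) - Gamma d (2 ^ j). gnorm per L d r (replicate d 0) powr (- \<alpha>))"
proof -
  define s where "s = sqrt (real d) * 2 ^ Suc j"
  have p1: "(1::real) \<le> 2 ^ Suc j" by (rule one_le_power) simp
  have "1 * 1 \<le> sqrt (real d) * 2 ^ Suc j" by (rule mult_mono) (use d p1 in auto)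
  hence s1: "1 \<le> s" unfolding s_def by simp
  define Sh where "Sh = Gamma d (2 ^ Suc j) - Gamma d (2 ^ j)"
  have tb: "inverse (s ^ d) \<le> gnorm per L d r (replicate d 0) powr (- \<alpha>)" if r: "r \<in> Sh" for r
  proof -
    let ?g = "gnorm per L d r (replicate d 0)"
    have rg: "r \<in> Gamma d (2 ^ Suc j)" using r unfolding Sh_def by simp
    have gb: "1 \<le> ?g \<and> ?g \<le> s" using gnorm_bounds[OF d rg L, of per] unfolding s_def by simp
    have "inverse (s ^ d) = s powr (- real d)" using s1 by (simp add: powr_minus powr_realpow)
    also have "\<dots> \<le> s powr (- \<alpha>)" by (rule powr_mono) (use ad s1 in auto)
    also have "\<dots> \<le> ?g powr (- \<alpha>)" by (rule powr_mono2') (use a0 gb in auto)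
    finally show ?thesis .
  qed
  have "(\<Sum>r\<in>Sh. inverse (s ^ d)) \<le> (\<Sum>r\<in>Sh. gnorm per L d r (replicate d 0) powr (- \<alpha>))"
    by (rule sum_mono) (rule tb)
  moreover have "kc0 d \<le> (\<Sum>r\<in>Sh. inverse (s ^ d))"
  proof -
    have sub: "Gamma d (2 ^ j) \<subseteq> Gamma d (2 ^ Suc j)" by (rule Gamma_mono) simp
    have cS: "card Sh = (2 ^ Suc j) ^ d - (2 ^ j) ^ d" unfolding Sh_def
      by (simp only: card_Diff_subset[OF Gamma_finite sub] Gamma_card)
    define N :: real where "N = (2 ^ j) ^ d"
    define A :: real where "A = 2 ^ d"
    define q where "q = sqrt (real d) ^ d"
    have N0: "N > 0" unfolding N_def by simp
    have "(2::real) ^ 1 \<le> 2 ^ d" by (rule power_increasing) (use d in auto)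
    hence A2: "A \<ge> 2" unfolding A_def by simp
    have q0: "q > 0" unfolding q_def using d by simp
    have le: "((2::nat) ^ j) ^ d \<le> (2 ^ Suc j) ^ d" by (rule power_mono) auto
    have "real (card Sh) = real ((2 ^ Suc j) ^ d) - real ((2 ^ j) ^ d)" unfolding cS
      by (rule of_nat_diff[OF le])
    also have "\<dots> = A * N - N" unfolding A_def N_def
        by (metis of_nat_numeral of_nat_power power_Suc power_mult_distrib)
    finally have "real (card Sh) = A * N - N" .
    moreover have "s ^ d = q * (A * N)" unfolding s_def q_def A_def N_def
      by (simp add: power_mult_distrib power_Suc)
    ultimately have e: "(\<Sum>r\<in>Sh. inverse (s ^ d)) = (A * N - N) / (q * (A * N))"
      by (simp add: divide_inverse)
    have "kc0 d = 1 / (2 * q)" unfolding kc0_def q_def ..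
    also have "\<dots> \<le> (A * N - N) / (q * (A * N))"
      using A2 N0 q0 by (simp add: field_simps)
    finally show ?thesis using e by simp
  qed
  ultimately show ?thesis unfolding Sh_def by linarith
qed

lemma kac_partial:
  assumes d: "1 \<le> d" and a0: "0 \<le> \<alpha>" and ad: "\<alpha> \<le> real d"
  shows "2 ^ k < L \<Longrightarrow> real k * kc0 d \<le> (\<Sum>r\<in>Gamma d (2 ^ k). gnorm per L d r (replicate d 0) powr (- \<alpha>))"
proof (induction k)
  case 0 show ?case by (simp add: sum_nonneg)
next
  case (Suc k)
  have lk: "2 ^ k < L" using Suc.prems by (metis less_trans n_less_m_mult_n pos2 power_Suc zero_less_power Suc_1 le_less_trans less_imp_le_nat lessI power_strict_increasing_iff)
  have sub: "Gamma d (2 ^ k) \<subseteq> Gamma d (2 ^ Suc k)" by (rule Gamma_mono) simp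
  have "(\<Sum>r\<in>Gamma d (2 ^ Suc k). gnorm per L d r (replicate d 0) powr (- \<alpha>)) =
     (\<Sum>r\<in>Gamma d (2 ^ Suc k) - Gamma d (2 ^ k). gnorm per L d r (replicate d 0) powr (- \<alpha>)) +
     (\<Sum>r\<in>Gamma d (2 ^ k). gnorm per L d r (replicate d 0) powr (- \<alpha>))"
    by (rule sum.subset_diff[OF sub Gamma_finite])
  moreover have "kc0 d \<le> (\<Sum>r\<in>Gamma d (2 ^ Suc k) - Gamma d (2 ^ k). gnorm per L d r (replicate d 0) powr (- \<alpha>))"
    by (rule shell_bound[OF d a0 ad Suc.prems])
  moreover have "real k * kc0 d \<le> (\<Sum>r\<in>Gamma d (2 ^ k). gnorm per L d r (replicate d 0) powr (- \<alpha>))"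
    by (rule Suc.IH[OF lk])
  ultimately show ?case by (simp add: distrib_right)
qed

lemma kac_lower:
  assumes d: "1 \<le> d" and a0: "0 \<le> \<alpha>" and ad: "\<alpha> \<le> real d" and k: "2 ^ k < L"
  shows "real k * kc0 d \<le> kac per d \<alpha> L"
proof -
  have "real k * kc0 d \<le> (\<Sum>r\<in>Gamma d (2 ^ k). gnorm per L d r (replicate d 0) powr (- \<alpha>))"
    by (rule kac_partial[OF d a0 ad k])
  also have "\<dots> \<le> (\<Sum>r\<in>Gamma d L. gnorm per L d r (replicate d 0) powr (- \<alpha>))"
    by (rule sum_mono2[OF Gamma_finite Gamma_mono]) (use k in auto)
  finally show ?thesis unfolding kac_def .
qed

lemma kac_at_top:
  assumes d: "1 \<le> d" and a0: "0 \<le> \<alpha>" and ad: "\<alpha> \<le> real d"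
  shows "filterlim (kac per d \<alpha>) at_top sequentially"
proof (rule filterlim_at_top[THEN iffD2], intro allI)
  fix Z :: real
  obtain k :: nat where k: "Z / kc0 d < real k" using reals_Archimedean2 by blast
  have "Z \<le> kac per d \<alpha> L" if "2 ^ k + 1 \<le> L" for L
  proof -
    have "Z \<le> real k * kc0 d" using k kc0_pos[OF d] by (simp add: divide_less_eq)
    also have "\<dots> \<le> kac per d \<alpha> L" by (rule kac_lower[OF d a0 ad]) (use that in simp)
    finally show ?thesis .
  qed
  thus "\<forall>\<^sub>F L in sequentially. Z \<le> kac per d \<alpha> L" by (rule eventually_sequentiallyI)
qed

lemma cfgs_finite: assumes "finite \<Lambda>" shows "finite (cfgs D \<Lambda>)"
proof -
  let ?f = "\<lambda>g::site \<Rightarrow> nat. \<lambda>j. if j \<in> \<Lambda> then g j else 0"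
  have "cfgs D \<Lambda> \<subseteq> ?f ` (PiE \<Lambda> (\<lambda>_. {..<D}))"
  proof
    fix \<sigma> assume s: "\<sigma> \<in> cfgs D \<Lambda>"
    have "restrict \<sigma> \<Lambda> \<in> PiE \<Lambda> (\<lambda>_. {..<D})" using s unfolding cfgs_def by auto
    moreover have "\<sigma> = ?f (restrict \<sigma> \<Lambda>)" using s unfolding cfgs_def by (auto simp: fun_eq_iff)
    ultimately show "\<sigma> \<in> ?f ` (PiE \<Lambda> (\<lambda>_. {..<D}))" by blast
  qed
  moreover have "finite (?f ` (PiE \<Lambda> (\<lambda>_. {..<D})))" by (intro finite_imageI finite_PiE assms) simp
  ultimately show ?thesis by (rule finite_subset)
qed

lemma cfgs_lt: "\<sigma> \<in> cfgs D \<Lambda> \<Longrightarrow> 0 < D \<Longrightarrow> \<sigma> k < D"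
  unfolding cfgs_def by (cases "k \<in> \<Lambda>") auto

lemma emb1_ebd: assumes "0 < D" "\<forall>a<D. \<forall>b<D. cmod (A a b) \<le> c" "0 \<le> c"
  shows "ebd (cfgs D \<Lambda>) (emb1 k A) c"
  unfolding ebd_def emb1_def using assms cfgs_lt by auto

lemma emb2_ebd: assumes "j \<in> \<Lambda>" "k \<in> \<Lambda>" "\<forall>a\<in>{..<D}\<times>{..<D}. \<forall>b\<in>{..<D}\<times>{..<D}. cmod (V a b) \<le> c" "0 \<le> c"
  shows "ebd (cfgs D \<Lambda>) (emb2 j k V) c"
  unfolding ebd_def emb2_def using assms unfolding cfgs_def by auto

definition K0 :: "real \<Rightarrow> nat \<Rightarrow> nat \<Rightarrow> real" where
  "K0 c n m = 2 * c * real n + real m * (c * (2 * (c * real n) ^ 2))"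

lemma K0_nonneg: "0 \<le> c \<Longrightarrow> 0 \<le> K0 c n m" unfolding K0_def by simp

lemma Lloc_bd:
  assumes fin: "finite I" and c0: "0 \<le> c" and hb: "ebd I (emb1 k (h k)) c"
    and lb: "\<And>\<mu>. \<mu> < m \<Longrightarrow> ebd I (emb1 k (Lop \<mu>)) c"
    and kb: "\<And>\<mu>. \<mu> < m \<Longrightarrow> 0 \<le> \<kappa> \<mu> k \<and> \<kappa> \<mu> k \<le> c"
  shows "n1 I (Lloc I m h \<kappa> Lop k X) \<le> K0 c (card I) m * n1 I X"
proof -
  let ?n = "real (card I)"
  let ?F = "\<lambda>\<mu> \<sigma> \<tau>. complex_of_real (\<kappa> \<mu> k) * dterm I (emb1 k (Lop \<mu>)) (emb1 k (Lop \<mu>)) X \<sigma> \<tau>"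
  have "n1 I (Lloc I m h \<kappa> Lop k X) \<le> n1 I (\<lambda>\<sigma> \<tau>. - \<i> * comm I (emb1 k (h k)) X \<sigma> \<tau>) + n1 I (\<lambda>\<sigma> \<tau>. \<Sum>\<mu><m. ?F \<mu> \<sigma> \<tau>)"
    unfolding Lloc_def by (rule n1_add)
  also have "n1 I (\<lambda>\<sigma> \<tau>. - \<i> * comm I (emb1 k (h k)) X \<sigma> \<tau>) = n1 I (comm I (emb1 k (h k)) X)"
    by (subst n1_scale) simp
  also have "\<dots> \<le> 2 * c * ?n * n1 I X" by (rule comm_bd[OF hb fin])
  also have "n1 I (\<lambda>\<sigma> \<tau>. \<Sum>\<mu><m. ?F \<mu> \<sigma> \<tau>) \<le> (\<Sum>\<mu><m. n1 I (?F \<mu>))" by (rule n1_sum)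
  also have "\<dots> \<le> (\<Sum>\<mu><m. c * (2 * (c * ?n) ^ 2 * n1 I X))"
  proof (rule sum_mono)
    fix \<mu> assume "\<mu> \<in> {..<m}"
    hence mu: "\<mu> < m" by simp
    have "n1 I (?F \<mu>) = cmod (complex_of_real (\<kappa> \<mu> k)) * n1 I (dterm I (emb1 k (Lop \<mu>)) (emb1 k (Lop \<mu>)) X)"
      by (rule n1_scale)
    also have "\<dots> \<le> c * (2 * (c * ?n) ^ 2 * n1 I X)"
      by (rule mult_mono) (use kb[OF mu] dterm_bd[OF lb[OF mu] lb[OF mu] c0 fin] in \<open>auto simp: n1_nonneg\<close>)
    finally show "n1 I (?F \<mu>) \<le> c * (2 * (c * ?n) ^ 2 * n1 I X)" .
  qed
  also have "(\<Sum>\<mu><m. c * (2 * (c * ?n) ^ 2 * n1 I X)) = real m * (c * (2 * (c * ?n) ^ 2)) * n1 I X"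
    by (simp add: mult_ac)
  finally show ?thesis unfolding K0_def by (simp add: algebra_simps)
qed

lemma Lpair_bd:
  assumes fin: "finite I" and c0: "0 \<le> c"
    and vb: "ebd I (\<lambda>\<sigma>' \<tau>'. emb2 j k (V j k) \<sigma>' \<tau>' + emb2 j k (V k j) \<sigma>' \<tau>') (2 * c)"
    and lbj: "\<And>\<mu>. \<mu> < m \<Longrightarrow> ebd I (emb1 j (Lop \<mu>)) c"
    and lbk: "\<And>\<mu>. \<mu> < m \<Longrightarrow> ebd I (emb1 k (Lop \<mu>)) c"
    and wb: "\<And>\<mu>. \<mu> < m \<Longrightarrow> cmod (w \<mu> j k) \<le> c \<and> cmod (w \<mu> k j) \<le> c"
  shows "n1 I (Lpair I m V w Lop j k X) \<le> K0 c (card I) m * n1 I X"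
proof -
  let ?n = "real (card I)"
  let ?C = "\<lambda>\<sigma> \<tau>. if j = k then 0 else - (\<i> / 2) * comm I (\<lambda>\<sigma>' \<tau>'. emb2 j k (V j k) \<sigma>' \<tau>' + emb2 j k (V k j) \<sigma>' \<tau>') X \<sigma> \<tau>"
  let ?F = "\<lambda>\<mu> \<sigma> \<tau>. w \<mu> j k / 2 * dterm I (emb1 j (Lop \<mu>)) (emb1 k (Lop \<mu>)) X \<sigma> \<tau>
               + w \<mu> k j / 2 * dterm I (emb1 k (Lop \<mu>)) (emb1 j (Lop \<mu>)) X \<sigma> \<tau>"
  have "n1 I (Lpair I m V w Lop j k X) \<le> n1 I ?C + n1 I (\<lambda>\<sigma> \<tau>. \<Sum>\<mu><m. ?F \<mu> \<sigma> \<tau>)"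
    unfolding Lpair_def by (rule n1_add)
  also have "n1 I ?C \<le> 2 * c * ?n * n1 I X"
  proof (cases "j = k")
    case True thus ?thesis using c0 n1_nonneg[of I X] by (simp add: n1_def)
  next
    case False
    have "n1 I ?C = n1 I (\<lambda>\<sigma> \<tau>. - (\<i> / 2) * comm I (\<lambda>\<sigma>' \<tau>'. emb2 j k (V j k) \<sigma>' \<tau>' + emb2 j k (V k j) \<sigma>' \<tau>') X \<sigma> \<tau>)"
      using False by simp
    also have "\<dots> = (1/2) * n1 I (comm I (\<lambda>\<sigma>' \<tau>'. emb2 j k (V j k) \<sigma>' \<tau>' + emb2 j k (V k j) \<sigma>' \<tau>') X)"
      by (subst n1_scale) (simp add: norm_divide)
    also have "\<dots> \<le> (1/2) * (2 * (2 * c) * ?n * n1 I X)"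
      by (rule mult_left_mono[OF comm_bd[OF vb fin]]) simp
    finally show ?thesis by (simp add: mult_ac)
  qed
  also have "n1 I (\<lambda>\<sigma> \<tau>. \<Sum>\<mu><m. ?F \<mu> \<sigma> \<tau>) \<le> (\<Sum>\<mu><m. n1 I (?F \<mu>))" by (rule n1_sum)
  also have "\<dots> \<le> (\<Sum>\<mu><m. c * (2 * (c * ?n) ^ 2 * n1 I X))"
  proof (rule sum_mono)
    fix \<mu> assume "\<mu> \<in> {..<m}"
    hence mu: "\<mu> < m" by simp
    have d1: "n1 I (\<lambda>\<sigma> \<tau>. w \<mu> j k / 2 * dterm I (emb1 j (Lop \<mu>)) (emb1 k (Lop \<mu>)) X \<sigma> \<tau>) \<le> c / 2 * (2 * (c * ?n) ^ 2 * n1 I X)"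
    proof -
      have "n1 I (\<lambda>\<sigma> \<tau>. w \<mu> j k / 2 * dterm I (emb1 j (Lop \<mu>)) (emb1 k (Lop \<mu>)) X \<sigma> \<tau>)
          = cmod (w \<mu> j k / 2) * n1 I (dterm I (emb1 j (Lop \<mu>)) (emb1 k (Lop \<mu>)) X)" by (rule n1_scale)
      also have "\<dots> \<le> c / 2 * (2 * (c * ?n) ^ 2 * n1 I X)"
        by (rule mult_mono) (use c0 wb[OF mu] dterm_bd[OF lbj[OF mu] lbk[OF mu] c0 fin] in \<open>auto simp: n1_nonneg norm_divide\<close>)
      finally show ?thesis .
    qed
    have d2: "n1 I (\<lambda>\<sigma> \<tau>. w \<mu> k j / 2 * dterm I (emb1 k (Lop \<mu>)) (emb1 j (Lop \<mu>)) X \<sigma> \<tau>) \<le> c / 2 * (2 * (c * ?n) ^ 2 * n1 I X)"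
    proof -
      have "n1 I (\<lambda>\<sigma> \<tau>. w \<mu> k j / 2 * dterm I (emb1 k (Lop \<mu>)) (emb1 j (Lop \<mu>)) X \<sigma> \<tau>)
          = cmod (w \<mu> k j / 2) * n1 I (dterm I (emb1 k (Lop \<mu>)) (emb1 j (Lop \<mu>)) X)" by (rule n1_scale)
      also have "\<dots> \<le> c / 2 * (2 * (c * ?n) ^ 2 * n1 I X)"
        by (rule mult_mono) (use c0 wb[OF mu] dterm_bd[OF lbk[OF mu] lbj[OF mu] c0 fin] in \<open>auto simp: n1_nonneg norm_divide\<close>)
      finally show ?thesis .
    qed
    have "n1 I (?F \<mu>) \<le> c / 2 * (2 * (c * ?n) ^ 2 * n1 I X) + c / 2 * (2 * (c * ?n) ^ 2 * n1 I X)"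
      by (rule order_trans[OF n1_add add_mono[OF d1 d2]])
    thus "n1 I (?F \<mu>) \<le> c * (2 * (c * ?n) ^ 2 * n1 I X)" by (simp add: mult_ac)
  qed
  also have "(\<Sum>\<mu><m. c * (2 * (c * ?n) ^ 2 * n1 I X)) = real m * (c * (2 * (c * ?n) ^ 2)) * n1 I X"
    by (simp add: mult_ac)
  finally show ?thesis unfolding K0_def by (simp add: algebra_simps)
qed

lemma comm_lin: "comm I A (\<lambda>a b. X a b - Y a b) \<sigma> \<tau> = comm I A X \<sigma> \<tau> - comm I A Y \<sigma> \<tau>"
  unfolding comm_def mm_diff_right mm_diff_left by simp

lemma dterm_lin: "dterm I A B (\<lambda>a b. X a b - Y a b) \<sigma> \<tau> = dterm I A B X \<sigma> \<tau> - dterm I A B Y \<sigma> \<tau>"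
  unfolding dterm_def mm_diff_right mm_diff_left by (simp add: algebra_simps)

lemma Lloc_lin: "Lloc I m h \<kappa> Lop k (\<lambda>a b. X a b - Y a b) \<sigma> \<tau> = Lloc I m h \<kappa> Lop k X \<sigma> \<tau> - Lloc I m h \<kappa> Lop k Y \<sigma> \<tau>"
  unfolding Lloc_def comm_lin dterm_lin by (simp add: algebra_simps sum_subtractf)

lemma Lpair_lin: "Lpair I m V w Lop j k (\<lambda>a b. X a b - Y a b) \<sigma> \<tau> = Lpair I m V w Lop j k X \<sigma> \<tau> - Lpair I m V w Lop j k Y \<sigma> \<tau>"
  unfolding Lpair_def comm_lin dterm_lin by (simp add: algebra_simps sum_subtractf)

lemma Lfull_lin: "Lfull per d \<alpha> D \<Lambda> m h V Lop \<kappa> w L (\<lambda>a b. X a b - Y a b) \<sigma> \<tau> =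
   Lfull per d \<alpha> D \<Lambda> m h V Lop \<kappa> w L X \<sigma> \<tau> - Lfull per d \<alpha> D \<Lambda> m h V Lop \<kappa> w L Y \<sigma> \<tau>"
  unfolding Lfull_def Lloc_lin Lpair_lin by (simp add: algebra_simps sum_subtractf diff_divide_distrib)

lemma cdist_Ints: "cdist per L a b \<in> \<int>"
  unfolding cdist_def
proof -
  have e: "\<bar>real a - real b\<bar> = of_int \<bar>int a - int b\<bar>" by simp
  show "(if per then min \<bar>real a - real b\<bar> (real L - \<bar>real a - real b\<bar>) else \<bar>real a - real b\<bar>) \<in> \<int>"
    unfolding e by (auto simp: min_def)
qed

lemma gnorm_01: "gnorm per L d j k = 0 \<or> 1 \<le> gnorm per L d j k"
proof -
  define S where "S = (\<Sum>i<d. (cdist per L (j ! i) (k ! i))\<^sup>2)"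
  have "S \<in> \<int>" unfolding S_def by (intro Ints_sum Ints_power cdist_Ints)
  then obtain z where z: "S = of_int z" by (auto elim: Ints_cases)
  have "0 \<le> S" unfolding S_def by (simp add: sum_nonneg)
  hence "S = 0 \<or> 1 \<le> S" using z by (cases "z = 0") auto
  thus ?thesis unfolding gnorm_def S_def[symmetric] by auto
qed

lemma wt_bound: assumes "0 \<le> \<alpha>"
  shows "cmod (inverse (complex_of_real (if j = k then 1 else gnorm per L d j k powr \<alpha>))) \<le> 1"
proof (cases "j = k")
  case True thus ?thesis by simp
next
  case False
  show ?thesis
  proof (cases "gnorm per L d j k = 0")
    case True thus ?thesis using False by simp
  next
    case nz: False
    hence "1 \<le> gnorm per L d j k" using gnorm_01 by blast
    hence "1 \<le> gnorm per L d j k powr \<alpha>" using assms by (rule ge_one_powr_ge_zero)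
    thus ?thesis using False by (simp add: norm_inverse inverse_le_1_iff)
  qed
qed

definition Ppair :: "bool \<Rightarrow> nat \<Rightarrow> real \<Rightarrow> nat \<Rightarrow> site set \<Rightarrow> nat \<Rightarrow> (site \<Rightarrow> site \<Rightarrow> top)
   \<Rightarrow> (nat \<Rightarrow> site \<Rightarrow> site \<Rightarrow> complex) \<Rightarrow> (nat \<Rightarrow> sop) \<Rightarrow> nat \<Rightarrow> op \<Rightarrow> op" where
  "Ppair per d \<alpha> D \<Lambda> m V w Lop L X = (\<lambda>\<sigma> \<tau>. \<Sum>j\<in>\<Lambda>. \<Sum>k\<in>\<Lambda>. Lpair (cfgs D \<Lambda>) m V w Lop j k X \<sigma> \<tau> /
            complex_of_real (if j = k then 1 else gnorm per L d j k powr \<alpha>))"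

lemma Lfull_split: "Lfull per d \<alpha> D \<Lambda> m h V Lop \<kappa> w L X \<sigma> \<tau> =
   Lhat D \<Lambda> m h Lop \<kappa> X \<sigma> \<tau> + complex_of_real (1 / (2 * kac per d \<alpha> L)) * Ppair per d \<alpha> D \<Lambda> m V w Lop L X \<sigma> \<tau>"
  unfolding Lfull_def Lhat_def Ppair_def ..

lemma n1_div_wt: assumes "cmod (inverse z) \<le> 1" shows "n1 I (\<lambda>a b. X a b / z) \<le> n1 I X"
proof -
  have "n1 I (\<lambda>a b. X a b / z) = n1 I (\<lambda>a b. inverse z * X a b)" by (simp add: divide_inverse mult.commute)
  also have "\<dots> = cmod (inverse z) * n1 I X" by (rule n1_scale)
  also have "\<dots> \<le> 1 * n1 I X" by (rule mult_right_mono[OF assms n1_nonneg])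
  finally show ?thesis by simp
qed

lemma Lhat_bd:
  assumes fin: "finite (cfgs D \<Lambda>)" and D0: "0 < D" and c0: "0 \<le> c"
    and hb: "\<And>k. \<forall>a<D. \<forall>b<D. cmod (h k a b) \<le> c"
    and lb: "\<And>\<mu>. \<mu> < m \<Longrightarrow> \<forall>a<D. \<forall>b<D. cmod (Lop \<mu> a b) \<le> c"
    and kb: "\<And>\<mu> k. \<mu> < m \<Longrightarrow> 0 \<le> \<kappa> \<mu> k \<and> \<kappa> \<mu> k \<le> c"
  shows "n1 (cfgs D \<Lambda>) (Lhat D \<Lambda> m h Lop \<kappa> X) \<le> real (card \<Lambda>) * K0 c (card (cfgs D \<Lambda>)) m * n1 (cfgs D \<Lambda>) X"
proof -
  let ?I = "cfgs D \<Lambda>"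
  have "n1 ?I (Lhat D \<Lambda> m h Lop \<kappa> X) \<le> (\<Sum>k\<in>\<Lambda>. n1 ?I (Lloc ?I m h \<kappa> Lop k X))"
    unfolding Lhat_def by (rule n1_sum)
  also have "\<dots> \<le> (\<Sum>k\<in>\<Lambda>. K0 c (card ?I) m * n1 ?I X)"
    by (rule sum_mono, rule Lloc_bd[OF fin c0 emb1_ebd[OF D0 hb c0]])
       (auto intro: emb1_ebd[OF D0 lb c0] dest: kb)
  finally show ?thesis by simp
qed

lemma Ppair_bd:
  assumes fin: "finite (cfgs D \<Lambda>)" and D0: "0 < D" and c0: "0 \<le> c" and a0: "0 \<le> \<alpha>"
    and vb: "\<And>j k. \<forall>a\<in>{..<D}\<times>{..<D}. \<forall>b\<in>{..<D}\<times>{..<D}. cmod (V j k a b) \<le> c"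
    and lb: "\<And>\<mu>. \<mu> < m \<Longrightarrow> \<forall>a<D. \<forall>b<D. cmod (Lop \<mu> a b) \<le> c"
    and wb: "\<And>\<mu> j k. \<mu> < m \<Longrightarrow> cmod (w \<mu> j k) \<le> c"
  shows "n1 (cfgs D \<Lambda>) (Ppair per d \<alpha> D \<Lambda> m V w Lop L X) \<le>
     real (card \<Lambda>) * (real (card \<Lambda>) * K0 c (card (cfgs D \<Lambda>)) m) * n1 (cfgs D \<Lambda>) X"
proof -
  let ?I = "cfgs D \<Lambda>"
  let ?F = "\<lambda>j k \<sigma> \<tau>. Lpair ?I m V w Lop j k X \<sigma> \<tau> / complex_of_real (if j = k then 1 else gnorm per L d j k powr \<alpha>)"
  have "n1 ?I (Ppair per d \<alpha> D \<Lambda> m V w Lop L X) \<le> (\<Sum>j\<in>\<Lambda>. n1 ?I (\<lambda>\<sigma> \<tau>. \<Sum>k\<in>\<Lambda>. ?F j k \<sigma> \<tau>))"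
    unfolding Ppair_def by (rule n1_sum)
  also have "\<dots> \<le> (\<Sum>j\<in>\<Lambda>. \<Sum>k\<in>\<Lambda>. n1 ?I (?F j k))" by (rule sum_mono, rule n1_sum)
  also have "\<dots> \<le> (\<Sum>j\<in>\<Lambda>. \<Sum>k\<in>\<Lambda>. K0 c (card ?I) m * n1 ?I X)"
  proof (rule sum_mono, rule sum_mono)
    fix j k assume j: "j \<in> \<Lambda>" and k: "k \<in> \<Lambda>"
    have "n1 ?I (?F j k) \<le> n1 ?I (Lpair ?I m V w Lop j k X)"
      by (rule n1_div_wt) (simp only: norm_inverse[symmetric] wt_bound[OF a0])
    also have "\<dots> \<le> K0 c (card ?I) m * n1 ?I X"
    proof (rule Lpair_bd[OF fin c0])
      show "ebd ?I (\<lambda>\<sigma>' \<tau>'. emb2 j k (V j k) \<sigma>' \<tau>' + emb2 j k (V k j) \<sigma>' \<tau>') (2 * c)"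
        using ebd_add[OF emb2_ebd[OF j k vb c0] emb2_ebd[OF j k vb c0]] by simp
    qed (auto intro: emb1_ebd[OF D0 lb c0] wb)
    finally show "n1 ?I (?F j k) \<le> K0 c (card ?I) m * n1 ?I X" .
  qed
  finally show ?thesis by (simp add: mult_ac)
qed

theorem lemma2:
  fixes per :: bool and d D m :: nat and \<alpha> :: real
    and \<Lambda> :: "site set"
    and h :: "nat \<Rightarrow> site \<Rightarrow> sop"
    and V :: "nat \<Rightarrow> site \<Rightarrow> site \<Rightarrow> top"
    and Lop :: "nat \<Rightarrow> nat \<Rightarrow> sop"
    and \<kappa> :: "nat \<Rightarrow> nat \<Rightarrow> site \<Rightarrow> real"
    and w :: "nat \<Rightarrow> nat \<Rightarrow> site \<Rightarrow> site \<Rightarrow> complex"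
    and Q :: op and t :: real
  assumes "1 \<le> d" and "2 \<le> D" and "0 \<le> \<alpha>" and "\<alpha> \<le> real d"
    and "finite \<Lambda>"
    and "\<forall>r\<in>\<Lambda>. length r = d \<and> (\<forall>i<d. 1 \<le> r ! i)"
    and "\<forall>L k. \<forall>a<D. \<forall>b<D. h L k a b = cnj (h L k b a)"
    and "\<forall>L j k. \<forall>a\<in>{..<D}\<times>{..<D}. \<forall>b\<in>{..<D}\<times>{..<D}. V L j k a b = cnj (V L j k b a)"
    and "\<forall>L \<mu> k. \<mu> < m \<longrightarrow> 0 \<le> \<kappa> L \<mu> k"
    and "\<exists>B. \<forall>L j k \<mu>.
           (\<forall>a<D. \<forall>b<D. cmod (h L k a b) \<le> B) \<and>
           (\<forall>a\<in>{..<D}\<times>{..<D}. \<forall>b\<in>{..<D}\<times>{..<D}. cmod (V L j k a b) \<le> B) \<and>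
           (\<mu> < m \<longrightarrow> (\<forall>a<D. \<forall>b<D. cmod (Lop L \<mu> a b) \<le> B) \<and>
                      \<kappa> L \<mu> k \<le> B \<and> cmod (w L \<mu> j k) \<le> B)"
    and "\<forall>\<^sub>F L in sequentially. \<forall>s\<ge>0.
           cptp (cfgs D \<Lambda>) (sexp s (Lfull per d \<alpha> D \<Lambda> m (h L) (V L) (Lop L) (\<kappa> L) (w L) L))"
    and "0 \<le> t"
  shows "(\<lambda>L. trace_norm (cfgs D \<Lambda>)
            (\<lambda>\<sigma> \<tau>. sexp t (Lfull per d \<alpha> D \<Lambda> m (h L) (V L) (Lop L) (\<kappa> L) (w L) L) Q \<sigma> \<tau>
                    - sexp t (Lhat D \<Lambda> m (h L) (Lop L) (\<kappa> L)) Q \<sigma> \<tau>))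
         \<longlonglongrightarrow> 0"
proof -
  let ?I = "cfgs D \<Lambda>"
  obtain Bb where Bb: "\<forall>L j k \<mu>.
           (\<forall>a<D. \<forall>b<D. cmod (h L k a b) \<le> Bb) \<and>
           (\<forall>a\<in>{..<D}\<times>{..<D}. \<forall>b\<in>{..<D}\<times>{..<D}. cmod (V L j k a b) \<le> Bb) \<and>
           (\<mu> < m \<longrightarrow> (\<forall>a<D. \<forall>b<D. cmod (Lop L \<mu> a b) \<le> Bb) \<and>
                      \<kappa> L \<mu> k \<le> Bb \<and> cmod (w L \<mu> j k) \<le> Bb)"
    using assms(10) by blast
  have D0: "0 < D" using assms(2) by simp
  have fin: "finite ?I" by (rule cfgs_finite[OF assms(5)])
  have hbL: "\<forall>a<D. \<forall>b<D. cmod (h L k a b) \<le> Bb" for L k using Bb by blast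
  have vbL: "\<forall>a\<in>{..<D}\<times>{..<D}. \<forall>b\<in>{..<D}\<times>{..<D}. cmod (V L j k a b) \<le> Bb" for L j k using Bb by blast
  have lbL: "\<mu> < m \<Longrightarrow> \<forall>a<D. \<forall>b<D. cmod (Lop L \<mu> a b) \<le> Bb" for L \<mu> using Bb by blast
  have kbL: "\<mu> < m \<Longrightarrow> 0 \<le> \<kappa> L \<mu> k \<and> \<kappa> L \<mu> k \<le> Bb" for L \<mu> k using Bb assms(9) by blast
  have wbL: "\<mu> < m \<Longrightarrow> cmod (w L \<mu> j k) \<le> Bb" for L \<mu> j k using Bb by blast
  have c0: "0 \<le> Bb"
  proof -
    have "cmod (h 0 [] 0 0) \<le> Bb" using hbL D0 by blast
    thus ?thesis using norm_ge_zero[of "h 0 [] 0 0"] by linarith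
  qed
  define n where "n = card ?I"
  define KH where "KH = real (card \<Lambda>) * K0 Bb n m"
  define KP where "KP = real (card \<Lambda>) * (real (card \<Lambda>) * K0 Bb n m)"
  have KH0: "0 \<le> KH" unfolding KH_def using K0_nonneg[OF c0] by simp
  have KP0: "0 \<le> KP" unfolding KP_def using K0_nonneg[OF c0] by simp
  define K where "K = 1 + KH + KP"
  have K1: "1 \<le> K" unfolding K_def using KH0 KP0 by simp
  define S where "S = (\<Sum>n. inverse (fact n) * (2 * K * t) ^ n)"
  have S0: "0 \<le> S" unfolding S_def
    by (rule suminf_nonneg[OF summable_exp]) (use K1 assms(12) in simp)
  define C where "C = KP * n1 ?I Q * S"
  have C0: "0 \<le> C" unfolding C_def using KP0 S0 n1_nonneg[of ?I Q] by simp
  define \<epsilon> where "\<epsilon> = (\<lambda>L. 1 / (2 * kac per d \<alpha> L))"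
  define tn where "tn = (\<lambda>L. trace_norm (cfgs D \<Lambda>)
            (\<lambda>\<sigma> \<tau>. sexp t (Lfull per d \<alpha> D \<Lambda> m (h L) (V L) (Lop L) (\<kappa> L) (w L) L) Q \<sigma> \<tau>
                    - sexp t (Lhat D \<Lambda> m (h L) (Lop L) (\<kappa> L)) Q \<sigma> \<tau>))"
  have kac_top: "filterlim (kac per d \<alpha>) at_top sequentially"
    by (rule kac_at_top[OF assms(1) assms(3) assms(4)])
  have ev: "\<forall>\<^sub>F L in sequentially. 1 \<le> kac per d \<alpha> L"
    using kac_top unfolding filterlim_at_top by blast
  have bound: "0 \<le> tn L \<and> tn L \<le> real n * (sqrt (real n) * (\<epsilon> L * C))" if k1: "1 \<le> kac per d \<alpha> L" for L
  proof -
    let ?\<Phi>1 = "Lfull per d \<alpha> D \<Lambda> m (h L) (V L) (Lop L) (\<kappa> L) (w L) L"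
    let ?\<Phi>2 = "Lhat D \<Lambda> m (h L) (Lop L) (\<kappa> L)"
    let ?Pp = "Ppair per d \<alpha> D \<Lambda> m (V L) (w L) (Lop L) L"
    let ?e = "complex_of_real (\<epsilon> L)"
    have e0: "0 \<le> \<epsilon> L" unfolding \<epsilon>_def using k1 by simp
    have e1: "\<epsilon> L \<le> 1" unfolding \<epsilon>_def using k1 by (simp add: field_simps)
    have ce: "cmod ?e = \<epsilon> L" using e0 by simp
    have b2: "n1 ?I (?\<Phi>2 X) \<le> K * n1 ?I X" for X
    proof -
      have "n1 ?I (?\<Phi>2 X) \<le> KH * n1 ?I X" unfolding KH_def n_def
        by (rule Lhat_bd[OF fin D0 c0 hbL lbL kbL])
      also have "\<dots> \<le> K * n1 ?I X" by (rule mult_right_mono[OF _ n1_nonneg]) (use KP0 in \<open>simp add: K_def\<close>)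
      finally show ?thesis .
    qed
    have bP: "n1 ?I (?Pp X) \<le> KP * n1 ?I X" for X unfolding KP_def n_def
      by (rule Ppair_bd[OF fin D0 c0 assms(3) vbL lbL wbL])
    have sp: "?\<Phi>1 X a b = ?\<Phi>2 X a b + ?e * ?Pp X a b" for X a b
      unfolding Lfull_split \<epsilon>_def ..
    have b1: "n1 ?I (?\<Phi>1 X) \<le> K * n1 ?I X" for X
    proof -
      have "n1 ?I (?\<Phi>1 X) = n1 ?I (\<lambda>a b. ?\<Phi>2 X a b + ?e * ?Pp X a b)" by (rule n1_cong) (rule sp)
      also have "\<dots> \<le> n1 ?I (?\<Phi>2 X) + n1 ?I (\<lambda>a b. ?e * ?Pp X a b)" by (rule n1_add)
      also have "n1 ?I (\<lambda>a b. ?e * ?Pp X a b) = \<epsilon> L * n1 ?I (?Pp X)" by (simp only: n1_scale ce)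
      also have "\<dots> \<le> 1 * (KP * n1 ?I X)" by (rule mult_mono[OF e1 bP]) (use KP0 n1_nonneg in auto)
      also have "n1 ?I (?\<Phi>2 X) \<le> KH * n1 ?I X" unfolding KH_def n_def
        by (rule Lhat_bd[OF fin D0 c0 hbL lbL kbL])
      finally have "n1 ?I (?\<Phi>1 X) \<le> (KH + KP) * n1 ?I X" by (simp add: algebra_simps)
      also have "\<dots> \<le> K * n1 ?I X" by (rule mult_right_mono[OF _ n1_nonneg]) (simp add: K_def)
      finally show ?thesis .
    qed
    have lin: "?\<Phi>1 (\<lambda>a b. X a b - Y a b) a b = ?\<Phi>1 X a b - ?\<Phi>1 Y a b" for X Y a b
      by (rule Lfull_lin)
    have entry: "cmod (sexp t ?\<Phi>1 Q a b - sexp t ?\<Phi>2 Q a b) \<le> \<epsilon> L * C" if a: "a \<in> ?I" and b: "b \<in> ?I" for a b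
    proof -
      have "cmod (sexp t ?\<Phi>1 Q a b - sexp t ?\<Phi>2 Q a b) \<le> cmod ?e * KP * n1 ?I Q * S"
        unfolding S_def by (rule sexp_diff_bound[OF lin b1 b2 sp bP K1 KP0 fin a b assms(12)])
      thus ?thesis unfolding C_def ce by (simp add: mult_ac)
    qed
    have d0: "0 \<le> \<epsilon> L * C" using e0 C0 by simp
    have ent: "\<forall>a\<in>?I. \<forall>b\<in>?I. cmod ((\<lambda>\<sigma> \<tau>. sexp t ?\<Phi>1 Q \<sigma> \<tau> - sexp t ?\<Phi>2 Q \<sigma> \<tau>) a b) \<le> \<epsilon> L * C"
      using entry by simp
    have "0 \<le> trace_norm ?I (\<lambda>\<sigma> \<tau>. sexp t ?\<Phi>1 Q \<sigma> \<tau> - sexp t ?\<Phi>2 Q \<sigma> \<tau>) \<and>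
      trace_norm ?I (\<lambda>\<sigma> \<tau>. sexp t ?\<Phi>1 Q \<sigma> \<tau> - sexp t ?\<Phi>2 Q \<sigma> \<tau>) \<le> real (card ?I) * (sqrt (real (card ?I)) * (\<epsilon> L * C))"
      by (rule trace_norm_bound[OF fin d0 ent])
    thus ?thesis unfolding tn_def n_def .
  qed
  have lim\<epsilon>: "\<epsilon> \<longlonglongrightarrow> 0"
  proof -
    have "(\<lambda>L. inverse (kac per d \<alpha> L)) \<longlonglongrightarrow> 0" by (rule tendsto_inverse_0_at_top[OF kac_top])
    hence "(\<lambda>L. inverse (kac per d \<alpha> L) / 2) \<longlonglongrightarrow> 0" by (rule tendsto_divide_zero)
    moreover have "(\<lambda>L. inverse (kac per d \<alpha> L) / 2) = \<epsilon>" unfolding \<epsilon>_def by (auto simp: field_simps)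
    ultimately show ?thesis by simp
  qed
  have up: "(\<lambda>L. real n * (sqrt (real n) * (\<epsilon> L * C))) \<longlonglongrightarrow> 0"
    using tendsto_mult_left[OF tendsto_mult_left[OF tendsto_mult_right[OF lim\<epsilon>, of C], of "sqrt (real n)"], of "real n"]
    by simp
  have "tn \<longlonglongrightarrow> 0"
  proof (rule tendsto_sandwich[OF _ _ tendsto_const up])
    show "\<forall>\<^sub>F L in sequentially. 0 \<le> tn L" using ev by eventually_elim (use bound in blast)
    show "\<forall>\<^sub>F L in sequentially. tn L \<le> real n * (sqrt (real n) * (\<epsilon> L * C))" using ev by eventually_elim (use bound in blast)
  qed
  thus ?thesis unfolding tn_def .
qed

end
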